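(* Let $V$ be a $\mathbb Q$-graded vertex operator algebra. (a) $O(V)$ is a two-sided ideal of $V$ with respect to the product $*$, and $A(V)=V/O(V)$ is an associative algebra with identity $\mathbf 1+O(V)$; moreover $\omega+O(V)$ lies in the center of $A(V)$. (b) For any weak $V$-module $M$, $\Omega(M)$ is an $A(V)$-module on which $a+O(V)$ acts as $o(a)$.
   Context: A $\mathbb Q$-graded vertex operator algebra $V=\oplus_{\alpha\in\mathbb Q}V_\alpha$ satisfies all axioms of a vertex operator algebra (vacuum $\mathbf 1$, conformal vector $\omega$, $L(0)$ acting on $V_\alpha$ by $\alpha$, Jacobi identity, etc.) except that the grading is by $\mathbb Q$ instead of $\mathbb Z$; ${\rm wt}\,a=\alpha$ for $a\in V_\alpha$. A weak $V$-module is a vector space $M$ with $Y_M:V\to({\rm End}M)[[z,z^{-1}]]$, $Y_M(a,z)=\sum a_nz^{-n-1}$, such that $Y_M(\mathbf 1,z)={\rm id}$, $Y_M(a,z)u\in M((z))$, $Y_M(L(-1)a,z)=\frac{d}{dz}Y_M(a,z)$, and the Jacobi identity holds. For homogeneous $a$ let $\varepsilon(a)=1$ if ${\rm wt}\,a\in\mathbb Z$ and $\varepsilon(a)=0$ otherwise, and $[\cdot]$ the greatest-integer function. Define $a*b=\varepsilon(a)\,{\rm Res}_x\frac{(1+x)^{[{\rm wt}a]}}{x}Y(a,x)b$ for homogeneous $a$, extended bilinearly; $O(V)$ is the span of ${\rm Res}_x\frac{(1+x)^{[{\rm wt}a]}}{x^{1+\varepsilon(a)}}Y(a,x)b$ for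 homogeneous $a\in V$, $b\in V$. For a weak module $M$, $\Omega(M)=\{u\in M: a_mu=0$ for all homogeneous $a$ and $m>{\rm wt}\,a-1\}$, and $o(a)=\varepsilon(a)a_{[{\rm wt}a]-1}$ for homogeneous $a$, extended linearly. *)

theory Defs
  imports Complex_Main
begin

class cvector = ab_group_add +
  fixes scaleC :: "complex \<Rightarrow> 'a \<Rightarrow> 'a" (infixr "*\<^sub>C" 75)
  assumes scaleC_add_right: "c *\<^sub>C (x + y) = c *\<^sub>C x + c *\<^sub>C y"
    and scaleC_add_left: "(c + d) *\<^sub>C x = c *\<^sub>C x + d *\<^sub>C x"
    and scaleC_scaleC: "c *\<^sub>C (d *\<^sub>C x) = (c * d) *\<^sub>C x"
    and scaleC_one: "1 *\<^sub>C x = x"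

text \<open>Vertex operators are encoded by their modes: Y a b n = a_n b, i.e.
  Y(a,z) b = sum over n of (Y a b n) z^(-n-1).  Vector spaces are over the complex numbers.\<close>

definition is_clin :: "('a::cvector \<Rightarrow> 'b::cvector) \<Rightarrow> bool" where
  "is_clin f \<longleftrightarrow> (\<forall>x y. f (x + y) = f x + f y) \<and> (\<forall>c x. f (c *\<^sub>C x) = c *\<^sub>C f x)"

definition cspan :: "'a::cvector set \<Rightarrow> 'a set" where
  "cspan S = {x. \<exists>T c. finite T \<and> T \<subseteq> S \<and> x = (\<Sum>s\<in>T. c s *\<^sub>C s)}"

text \<open>Sum of a sequence with only finitely many nonzero terms (all sums below are of this kind
  by the truncation axiom).\<close>
definition fsum :: "(nat \<Rightarrow> 'a::comm_monoid_add) \<Rightarrow> 'a" where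
  "fsum f = sum f {i. f i \<noteq> 0}"

text \<open>Truncation: Y(a,z)w has only finitely many negative powers of z.\<close>
definition truncation :: "('v \<Rightarrow> 'm \<Rightarrow> int \<Rightarrow> 'm::zero) \<Rightarrow> bool" where
  "truncation YM \<longleftrightarrow> (\<forall>a w. \<exists>N. \<forall>n\<ge>N. YM a w n = 0)"

text \<open>Jacobi identity, written out coefficientwise (Borcherds identity):
  sum_i binom(m,i) (a_{l+i} b)_{m+n-i} w
   = sum_i (-1)^i binom(l,i) (a_{m+l-i} b_{n+i} w - (-1)^l b_{n+l-i} a_{m+i} w).\<close>
definition jacobi :: "('v \<Rightarrow> 'v \<Rightarrow> int \<Rightarrow> 'v) \<Rightarrow> ('v \<Rightarrow> 'm \<Rightarrow> int \<Rightarrow> 'm::cvector) \<Rightarrow> bool" where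
  "jacobi Y YM \<longleftrightarrow> (\<forall>a b w m n l.
     fsum (\<lambda>i. ((of_int m :: complex) gchoose i) *\<^sub>C YM (Y a b (l + int i)) w (m + n - int i)) =
     fsum (\<lambda>i. ((-1) ^ i * ((of_int l :: complex) gchoose i)) *\<^sub>C YM a (YM b w (n + int i)) (m + l - int i))
     - fsum (\<lambda>i. ((-1) ^ i * (if even l then 1 else -1) * ((of_int l :: complex) gchoose i))
                  *\<^sub>C YM b (YM a w (m + int i)) (n + l - int i)))"

text \<open>Homogeneous subspace V_alpha: L(0) = omega_1 acts by alpha.\<close>
definition Vg :: "('v \<Rightarrow> 'v \<Rightarrow> int \<Rightarrow> 'v::cvector) \<Rightarrow> 'v \<Rightarrow> rat \<Rightarrow> 'v set" where
  "Vg Y \<omega> \<alpha> = {v. Y \<omega> v 1 = of_rat \<alpha> *\<^sub>C v}"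

definition qVOA :: "('v::cvector \<Rightarrow> 'v \<Rightarrow> int \<Rightarrow> 'v) \<Rightarrow> 'v \<Rightarrow> 'v \<Rightarrow> complex \<Rightarrow> bool" where
  "qVOA Y vac \<omega> cc \<longleftrightarrow>
     (\<forall>b n. is_clin (\<lambda>a. Y a b n)) \<and> (\<forall>a n. is_clin (\<lambda>b. Y a b n))
   \<and> (\<forall>v. \<exists>S f. finite S \<and> (\<forall>\<alpha>\<in>S. f \<alpha> \<in> Vg Y \<omega> \<alpha>) \<and> v = sum f S)
   \<and> (\<forall>\<alpha>. \<exists>B. finite B \<and> Vg Y \<omega> \<alpha> \<subseteq> cspan B)
   \<and> (\<exists>N. \<forall>\<alpha><N. Vg Y \<omega> \<alpha> = {0})
   \<and> truncation Y
   \<and> (\<forall>b n. Y vac b n = (if n = -1 then b else 0))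
   \<and> (\<forall>a n. n \<ge> 0 \<longrightarrow> Y a vac n = 0) \<and> (\<forall>a. Y a vac (-1) = a)
   \<and> jacobi Y Y
   \<and> (\<forall>m n v. Y \<omega> (Y \<omega> v (n + 1)) (m + 1) - Y \<omega> (Y \<omega> v (m + 1)) (n + 1)
              = of_int (m - n) *\<^sub>C Y \<omega> v (m + n + 1)
                + (if m + n = 0 then (of_int (m ^ 3 - m) / 12 * cc) *\<^sub>C v else 0))
   \<and> \<omega> \<in> Vg Y \<omega> 2
   \<and> (\<forall>a b n. Y (Y \<omega> a 0) b n = - (of_int n *\<^sub>C Y a b (n - 1)))"

definition hcomp :: "('v \<Rightarrow> 'v \<Rightarrow> int \<Rightarrow> 'v::cvector) \<Rightarrow> 'v \<Rightarrow> rat \<Rightarrow> 'v \<Rightarrow> 'v" where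
  "hcomp Y \<omega> \<alpha> v = (THE w. \<exists>S f. finite S \<and> (\<forall>\<beta>\<in>S. f \<beta> \<in> Vg Y \<omega> \<beta>) \<and> v = sum f S
                              \<and> w = (if \<alpha> \<in> S then f \<alpha> else 0))"

definition starh :: "('v \<Rightarrow> 'v \<Rightarrow> int \<Rightarrow> 'v::cvector) \<Rightarrow> rat \<Rightarrow> 'v \<Rightarrow> 'v \<Rightarrow> 'v" where
  "starh Y \<alpha> a b = (if \<alpha> \<in> \<int> then fsum (\<lambda>i. ((of_int \<lfloor>\<alpha>\<rfloor> :: complex) gchoose i) *\<^sub>C Y a b (int i - 1)) else 0)"

definition star :: "('v \<Rightarrow> 'v \<Rightarrow> int \<Rightarrow> 'v::cvector) \<Rightarrow> 'v \<Rightarrow> 'v \<Rightarrow> 'v \<Rightarrow> 'v" where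
  "star Y \<omega> a b = (\<Sum>\<alpha>\<in>{\<alpha>. hcomp Y \<omega> \<alpha> a \<noteq> 0}. starh Y \<alpha> (hcomp Y \<omega> \<alpha> a) b)"

text \<open>Res_x (1+x)^[wt a] / x^(1+eps(a)) Y(a,x) b for a homogeneous of weight alpha.\<close>
definition Oh :: "('v \<Rightarrow> 'v \<Rightarrow> int \<Rightarrow> 'v::cvector) \<Rightarrow> rat \<Rightarrow> 'v \<Rightarrow> 'v \<Rightarrow> 'v" where
  "Oh Y \<alpha> a b = fsum (\<lambda>i. ((of_int \<lfloor>\<alpha>\<rfloor> :: complex) gchoose i) *\<^sub>C
                        Y a b (int i - 1 - (if \<alpha> \<in> \<int> then 1 else 0)))"

definition OV :: "('v \<Rightarrow> 'v \<Rightarrow> int \<Rightarrow> 'v::cvector) \<Rightarrow> 'v \<Rightarrow> 'v set" where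
  "OV Y \<omega> = cspan {Oh Y \<alpha> a b | \<alpha> a b. a \<in> Vg Y \<omega> \<alpha>}"

definition weak_module :: "('v::cvector \<Rightarrow> 'v \<Rightarrow> int \<Rightarrow> 'v) \<Rightarrow> 'v \<Rightarrow> 'v
     \<Rightarrow> ('v \<Rightarrow> 'm::cvector \<Rightarrow> int \<Rightarrow> 'm) \<Rightarrow> bool" where
  "weak_module Y vac \<omega> YM \<longleftrightarrow>
     (\<forall>w n. is_clin (\<lambda>a. YM a w n)) \<and> (\<forall>a n. is_clin (\<lambda>w. YM a w n))
   \<and> truncation YM
   \<and> (\<forall>w n. YM vac w n = (if n = -1 then w else 0))
   \<and> (\<forall>a w n. YM (Y \<omega> a 0) w n = - (of_int n *\<^sub>C YM a w (n - 1)))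
   \<and> jacobi Y YM"

definition Omega :: "('v \<Rightarrow> 'v \<Rightarrow> int \<Rightarrow> 'v::cvector) \<Rightarrow> 'v \<Rightarrow> ('v \<Rightarrow> 'm \<Rightarrow> int \<Rightarrow> 'm::zero) \<Rightarrow> 'm set" where
  "Omega Y \<omega> YM = {u. \<forall>\<alpha> a m. a \<in> Vg Y \<omega> \<alpha> \<and> of_int m > \<alpha> - 1 \<longrightarrow> YM a u m = 0}"

definition oh :: "('v \<Rightarrow> 'm \<Rightarrow> int \<Rightarrow> 'm::zero) \<Rightarrow> rat \<Rightarrow> 'v \<Rightarrow> 'm \<Rightarrow> 'm" where
  "oh YM \<alpha> a u = (if \<alpha> \<in> \<int> then YM a u (\<lfloor>\<alpha>\<rfloor> - 1) else 0)"

definition oop :: "('v \<Rightarrow> 'v \<Rightarrow> int \<Rightarrow> 'v::cvector) \<Rightarrow> 'v \<Rightarrow> ('v \<Rightarrow> 'm \<Rightarrow> int \<Rightarrow> 'm::comm_monoid_add)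
     \<Rightarrow> 'v \<Rightarrow> 'm \<Rightarrow> 'm" where
  "oop Y \<omega> YM a u = (\<Sum>\<alpha>\<in>{\<alpha>. hcomp Y \<omega> \<alpha> a \<noteq> 0}. oh YM \<alpha> (hcomp Y \<omega> \<alpha> a) u)"

end

theory Submission
  imports Defs "HOL-Computational_Algebra.Formal_Power_Series"
begin

lemma scaleC_zero_right [simp]: "c *\<^sub>C (0::'a::cvector) = 0"
proof -
  have "c *\<^sub>C (0::'a) = c *\<^sub>C (0 + 0)" by simp
  also have "\<dots> = c *\<^sub>C 0 + c *\<^sub>C 0" by (rule scaleC_add_right)
  finally show ?thesis by simp
qed

lemma scaleC_zero_left [simp]: "0 *\<^sub>C (x::'a::cvector) = 0"
proof -
  have "0 *\<^sub>C x = (0 + 0) *\<^sub>C x" by simp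
  also have "\<dots> = 0 *\<^sub>C x + 0 *\<^sub>C x" by (rule scaleC_add_left)
  finally show ?thesis by simp
qed

lemma scaleC_minus_right: "c *\<^sub>C (- x::'a::cvector) = - (c *\<^sub>C x)"
proof -
  have "c *\<^sub>C (- x) + c *\<^sub>C x = c *\<^sub>C (- x + x)" by (rule scaleC_add_right[symmetric])
  then have "c *\<^sub>C (- x) + c *\<^sub>C x = 0" by simp
  then show ?thesis by (rule eq_neg_iff_add_eq_0[THEN iffD2])
qed

lemma scaleC_minus_left: "(- c) *\<^sub>C (x::'a::cvector) = - (c *\<^sub>C x)"
proof -
  have "(- c) *\<^sub>C x + c *\<^sub>C x = (- c + c) *\<^sub>C x" by (simp only: scaleC_add_left)
  also have "\<dots> = 0" by (simp only: add.left_inverse scaleC_zero_left)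
  finally show ?thesis by (rule eq_neg_iff_add_eq_0[THEN iffD2])
qed

lemma scaleC_diff_right: "c *\<^sub>C (x - y::'a::cvector) = c *\<^sub>C x - c *\<^sub>C y"
  using scaleC_add_right[of c x "-y"] by (simp only: diff_conv_add_uminus scaleC_minus_right)

lemma scaleC_diff_left: "(c - d) *\<^sub>C (x::'a::cvector) = c *\<^sub>C x - d *\<^sub>C x"
  using scaleC_add_left[of c "-d" x] by (simp only: diff_conv_add_uminus scaleC_minus_left)

lemma scaleC_sum_right: "c *\<^sub>C (\<Sum>i\<in>A. f i) = (\<Sum>i\<in>A. c *\<^sub>C (f i::'a::cvector))"
  by (induct A rule: infinite_finite_induct) (auto simp: scaleC_add_right)

lemma scaleC_sum_left: "(\<Sum>i\<in>A. f i) *\<^sub>C (x::'a::cvector) = (\<Sum>i\<in>A. f i *\<^sub>C x)"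
  by (induct A rule: infinite_finite_induct) (auto simp: scaleC_add_left)

lemma scaleC_eq_0_iff [simp]: "c *\<^sub>C (x::'a::cvector) = 0 \<longleftrightarrow> c = 0 \<or> x = 0"
proof
  assume h: "c *\<^sub>C x = 0"
  show "c = 0 \<or> x = 0"
  proof (cases "c = 0")
    case False
    have "x = (inverse c * c) *\<^sub>C x" using False by (simp add: scaleC_one)
    also have "\<dots> = inverse c *\<^sub>C (c *\<^sub>C x)" by (simp add: scaleC_scaleC)
    finally show ?thesis using h by simp
  qed simp
qed auto

lemmas scaleC_one' [simp] = scaleC_one
lemmas scaleC_scaleC' [simp] = scaleC_scaleC

lemma is_clinD:
  assumes "is_clin f"
  shows "f (x + y) = f x + f y" "f (c *\<^sub>C x) = c *\<^sub>C f x"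
  using assms by (auto simp: is_clin_def)

lemma is_clin_0: "is_clin f \<Longrightarrow> f 0 = 0"
  using is_clinD(2)[of f 0 0] by simp

lemma is_clin_minus: "is_clin f \<Longrightarrow> f (- x) = - f x"
  using is_clinD(2)[of f "-1" x] by (simp add: scaleC_minus_left)

lemma is_clin_diff: "is_clin f \<Longrightarrow> f (x - y) = f x - f y"
  using is_clinD(1)[of f x "-y"] is_clin_minus[of f y] by simp

lemma is_clin_sum: "is_clin f \<Longrightarrow> f (\<Sum>i\<in>A. g i) = (\<Sum>i\<in>A. f (g i))"
  by (induct A rule: infinite_finite_induct) (auto simp: is_clin_0 is_clinD)

definition fin :: "(nat \<Rightarrow> 'a::zero) \<Rightarrow> bool" where
  "fin f \<longleftrightarrow> (\<exists>N. \<forall>i\<ge>N. f i = 0)"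

lemma finI: "(\<And>i. i \<ge> N \<Longrightarrow> f i = 0) \<Longrightarrow> fin f"
  unfolding fin_def by blast

lemma fin_finite: "fin f \<Longrightarrow> finite {i. f i \<noteq> 0}"
proof -
  assume "fin f"
  then obtain N where "\<forall>i\<ge>N. f i = 0" unfolding fin_def by blast
  then have "{i. f i \<noteq> 0} \<subseteq> {..<N}" by (auto simp: not_less[symmetric])
  then show ?thesis using finite_subset by blast
qed

lemma fsum_superset:
  assumes "finite S" "\<And>i. i \<notin> S \<Longrightarrow> f i = 0"
  shows "fsum f = sum f S"
  unfolding fsum_def using assms
  by (intro sum.mono_neutral_left) auto

lemma fsum_box: "(\<And>i. i \<ge> N \<Longrightarrow> f i = 0) \<Longrightarrow> fsum f = sum f {..<N}"
  by (rule fsum_superset) auto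

lemma fsum_zero [simp]: "fsum (\<lambda>i. 0) = 0"
  by (simp add: fsum_def)

lemma fsum_cong: "(\<And>i. f i = g i) \<Longrightarrow> fsum f = fsum g"
  by metis

lemma fin_add: "fin f \<Longrightarrow> fin g \<Longrightarrow> fin (\<lambda>i. f i + (g i::'a::monoid_add))"
proof -
  assume "fin f" "fin g"
  then obtain N1 N2 where "\<forall>i\<ge>N1. f i = 0" "\<forall>i\<ge>N2. g i = 0" unfolding fin_def by blast
  then show ?thesis by (intro finI[of "max N1 N2"]) auto
qed

lemma fin_mono: "fin g \<Longrightarrow> (\<And>i. g i = 0 \<Longrightarrow> f i = 0) \<Longrightarrow> fin f"
  unfolding fin_def by blast

lemma fin_zero [simp]: "fin (\<lambda>i. 0)"
  unfolding fin_def by simp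

lemma fsum_add:
  assumes "fin f" "fin g"
  shows "fsum (\<lambda>i. f i + g i) = fsum f + (fsum g :: 'a::comm_monoid_add)"
proof -
  obtain N1 where 1: "\<And>i. i \<ge> N1 \<Longrightarrow> f i = 0" using assms unfolding fin_def by blast
  obtain N2 where 2: "\<And>i. i \<ge> N2 \<Longrightarrow> g i = 0" using assms unfolding fin_def by blast
  have "fsum (\<lambda>i. f i + g i) = sum (\<lambda>i. f i + g i) {..<max N1 N2}"
    by (rule fsum_box) (simp add: 1 2)
  moreover have "fsum f = sum f {..<max N1 N2}" by (rule fsum_box) (simp add: 1)
  moreover have "fsum g = sum g {..<max N1 N2}" by (rule fsum_box) (simp add: 2)
  ultimately show ?thesis by (simp add: sum.distrib)
qed

lemma fsum_lin:
  assumes "is_clin L" "fin f"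
  shows "L (fsum f) = fsum (\<lambda>i. L (f i))"
proof -
  obtain N where 1: "\<And>i. i \<ge> N \<Longrightarrow> f i = 0" using assms unfolding fin_def by blast
  have "fsum f = sum f {..<N}" by (rule fsum_box) (simp add: 1)
  moreover have "fsum (\<lambda>i. L (f i)) = sum (\<lambda>i. L (f i)) {..<N}"
    by (rule fsum_box) (simp add: 1 is_clin_0 assms)
  ultimately show ?thesis by (simp add: is_clin_sum assms)
qed

lemma fsum_scaleC:
  assumes "fin f"
  shows "c *\<^sub>C fsum f = fsum (\<lambda>i. c *\<^sub>C (f i :: 'a::cvector))"
proof -
  have "is_clin (\<lambda>x::'a. c *\<^sub>C x)"
    by (simp add: is_clin_def scaleC_add_right mult.commute)
  then show ?thesis using fsum_lin assms by blast
qed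

lemma fsum_mult:
  assumes "fin f"
  shows "c * fsum f = fsum (\<lambda>i. c * (f i :: complex))"
proof -
  obtain N where 1: "\<And>i. i \<ge> N \<Longrightarrow> f i = 0" using assms unfolding fin_def by blast
  show ?thesis by (simp add: fsum_box[of N] 1 sum_distrib_left)
qed

lemma fsum_neg:
  assumes "fin f"
  shows "fsum (\<lambda>i. - f i) = - (fsum f :: 'a::ab_group_add)"
proof -
  obtain N where 1: "\<And>i. i \<ge> N \<Longrightarrow> f i = 0" using assms unfolding fin_def by blast
  show ?thesis by (simp add: fsum_box[of N] 1 sum_negf)
qed

lemma fsum_diff:
  assumes "fin f" "fin g"
  shows "fsum (\<lambda>i. f i - g i) = fsum f - (fsum g :: 'a::ab_group_add)"
proof -
  obtain N1 where 1: "\<And>i. i \<ge> N1 \<Longrightarrow> f i = 0" using assms unfolding fin_def by blast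
  obtain N2 where 2: "\<And>i. i \<ge> N2 \<Longrightarrow> g i = 0" using assms unfolding fin_def by blast
  show ?thesis by (simp add: fsum_box[of "max N1 N2"] 1 2 sum_subtractf)
qed

lemma fsum_single: "(\<And>i. i \<noteq> k \<Longrightarrow> f i = 0) \<Longrightarrow> fsum f = f k"
  by (subst fsum_superset[of "{k}"]) auto

lemma fsum_swap:
  assumes "\<And>i j. h i j \<noteq> 0 \<Longrightarrow> i < N \<and> j < N"
  shows "fsum (\<lambda>i. fsum (\<lambda>j. h i j)) = fsum (\<lambda>j. fsum (\<lambda>i. h i j :: 'a::comm_monoid_add))"
proof -
  have a: "fsum (\<lambda>j. h i j) = sum (\<lambda>j. h i j) {..<N}" for i
    by (rule fsum_box) (rule ccontr, drule assms, simp)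
  have b: "fsum (\<lambda>i. h i j) = sum (\<lambda>i. h i j) {..<N}" for j
    by (rule fsum_box) (rule ccontr, drule assms, simp)
  have c: "fsum (\<lambda>i. sum (\<lambda>j. h i j) {..<N}) = sum (\<lambda>i. sum (\<lambda>j. h i j) {..<N}) {..<N}"
    by (rule fsum_box) (intro sum.neutral ballI, rule ccontr, drule assms, simp)
  have d: "fsum (\<lambda>j. sum (\<lambda>i. h i j) {..<N}) = sum (\<lambda>j. sum (\<lambda>i. h i j) {..<N}) {..<N}"
    by (rule fsum_box) (intro sum.neutral ballI, rule ccontr, drule assms, simp)
  show ?thesis unfolding a b c d by (rule sum.swap)
qed

lemma fsum_shift:
  assumes "\<And>j. j < k \<Longrightarrow> g j = 0" "fin g"
  shows "fsum g = fsum (\<lambda>u. g (k + u) :: 'a::comm_monoid_add)"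
proof -
  obtain N where 1: "\<And>i. i \<ge> N \<Longrightarrow> g i = 0" using assms unfolding fin_def by blast
  have "fsum g = sum g {..<N + k}" by (rule fsum_box) (simp add: 1)
  also have "\<dots> = sum g {k..<N + k}"
    by (rule sum.mono_neutral_right) (auto simp: assms)
  also have "\<dots> = sum (\<lambda>u. g (k + u)) {..<N}"
    by (rule sum.reindex_bij_witness[where j="\<lambda>j. j - k" and i="\<lambda>u. k + u"]) auto
  also have "\<dots> = fsum (\<lambda>u. g (k + u))" by (rule fsum_box[symmetric]) (simp add: 1)
  finally show ?thesis .
qed

lemma fsum_triangle:
  assumes "\<And>i j. h i j \<noteq> 0 \<Longrightarrow> i + j < N"
  shows "fsum (\<lambda>i. fsum (\<lambda>j. h i j)) = fsum (\<lambda>s. \<Sum>i\<le>s. h i (s - i) :: 'a::comm_monoid_add)"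
proof -
  have a: "fsum (\<lambda>j. h i j) = sum (\<lambda>j. h i j) {..<N}" for i
    by (rule fsum_box) (rule ccontr, drule assms, simp)
  have c: "fsum (\<lambda>i. sum (\<lambda>j. h i j) {..<N}) = sum (\<lambda>i. sum (\<lambda>j. h i j) {..<N}) {..<N}"
    by (rule fsum_box) (intro sum.neutral ballI, rule ccontr, drule assms, simp)
  have d: "fsum (\<lambda>s. \<Sum>i\<le>s. h i (s - i)) = sum (\<lambda>s. \<Sum>i\<le>s. h i (s - i)) {..<N}"
    by (rule fsum_box) (intro sum.neutral ballI, rule ccontr, drule assms, simp)
  have "sum (\<lambda>i. sum (\<lambda>j. h i j) {..<N}) {..<N} = (\<Sum>(i,j)\<in>{..<N}\<times>{..<N}. h i j)"
    by (simp add: sum.cartesian_product)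
  also have "\<dots> = (\<Sum>(i,j)\<in>{(i,j). i + j < N}. h i j)"
    by (rule sum.mono_neutral_cong_right) (auto dest: assms)
  also have "\<dots> = sum (\<lambda>s. \<Sum>i\<le>s. h i (s - i)) {..<N}"
    by (rule sum.triangle_reindex)
  finally show ?thesis by (simp add: a c d)
qed

lemma fsum_sum:
  assumes "finite S" "\<And>s. s \<in> S \<Longrightarrow> fin (h s)"
  shows "fsum (\<lambda>i. \<Sum>s\<in>S. h s i) = (\<Sum>s\<in>S. fsum (h s) :: 'a::comm_monoid_add)"
  using assms
proof (induct S rule: finite_induct)
  case (insert x F)
  have "fin (\<lambda>i. \<Sum>s\<in>F. h s i)"
  proof -
    have "\<forall>s\<in>F. \<exists>N. \<forall>i\<ge>N. h s i = 0" using insert unfolding fin_def by blast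
    from bchoice[OF this] obtain Nf where Nf: "\<forall>s\<in>F. \<forall>i\<ge>Nf s. h s i = 0" by blast
    show ?thesis
    proof (rule finI[of "Max (Nf ` F)"], rule sum.neutral, rule ballI)
      fix i s assume i: "Max (Nf ` F) \<le> i" and s: "s \<in> F"
      have "Nf s \<le> Max (Nf ` F)" using s insert(1) by (simp add: Max_ge)
      then show "h s i = 0" using Nf s i by auto
    qed
  qed
  then show ?case using insert by (simp add: fsum_add)
qed simp


lemma fsum_zero_cond: "(\<And>i. f i = 0) \<Longrightarrow> fsum f = 0"
  by (simp add: fsum_def)

lemma box_intro:
  fixes h :: "nat \<Rightarrow> nat \<Rightarrow> 'a::zero"
  assumes "\<And>i j. i \<ge> I \<Longrightarrow> h i j = 0" "\<And>i j. i < I \<Longrightarrow> j \<ge> J \<Longrightarrow> h i j = 0"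
  shows "\<exists>N. \<forall>i j. h i j \<noteq> 0 \<longrightarrow> i < N \<and> j < N"
proof (intro exI[of _ "max I J"] allI impI)
  fix i j assume "h i j \<noteq> 0"
  then have i: "i < I" using assms(1)[of i j] by (cases "i < I") (auto simp: not_less)
  have "j < J" using \<open>h i j \<noteq> 0\<close> assms(2)[OF i, of j] by (cases "j < J") (auto simp: not_less)
  then show "i < max I J \<and> j < max I J" using i by (simp add: less_max_iff_disj)
qed

lemma box_intro':
  fixes h :: "nat \<Rightarrow> nat \<Rightarrow> 'a::zero"
  assumes "\<And>i j. j \<ge> J \<Longrightarrow> h i j = 0" "\<And>i j. j < J \<Longrightarrow> i \<ge> I \<Longrightarrow> h i j = 0"
  shows "\<exists>N. \<forall>i j. h i j \<noteq> 0 \<longrightarrow> i < N \<and> j < N"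
proof (intro exI[of _ "max I J"] allI impI)
  fix i j assume "h i j \<noteq> 0"
  then have j: "j < J" using assms(1)[of j i] by (cases "j < J") (auto simp: not_less)
  have "i < I" using \<open>h i j \<noteq> 0\<close> assms(2)[OF j, of i] by (cases "i < I") (auto simp: not_less)
  then show "i < max I J \<and> j < max I J" using j by (simp add: less_max_iff_disj)
qed

lemma fsum_swap':
  assumes "\<exists>N. \<forall>i j. h i j \<noteq> 0 \<longrightarrow> i < N \<and> j < N"
  shows "fsum (\<lambda>i. fsum (\<lambda>j. h i j)) = fsum (\<lambda>j. fsum (\<lambda>i. h i j :: 'a::comm_monoid_add))"
proof -
  obtain N where N: "\<forall>i j. h i j \<noteq> 0 \<longrightarrow> i < N \<and> j < N" using assms by blast
  show ?thesis by (rule fsum_swap[of h N]) (use N in blast)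
qed

lemma unif_bound:
  assumes "\<And>i. \<exists>N::int. \<forall>n\<ge>N. P i n"
  shows "\<exists>N. \<forall>i<(I::nat). \<forall>n\<ge>N. P i n"
proof (induct I)
  case 0 then show ?case by simp
next
  case (Suc I)
  then obtain N where N: "\<forall>i<I. \<forall>n\<ge>N. P i n" by blast
  obtain N' where N': "\<forall>n\<ge>N'. P I n" using assms by blast
  show ?case
  proof (intro exI[of _ "max N N'"] allI impI)
    fix i n assume i: "i < Suc I" and n: "max N N' \<le> n"
    show "P i n"
    proof (cases "i < I")
      case True then show ?thesis using N n by simp
    next
      case False then have "i = I" using i by simp
      then show ?thesis using N' n by simp
    qed
  qed
qed

abbreviation bn :: "int \<Rightarrow> nat \<Rightarrow> complex" where "bn s j \<equiv> (of_int s :: complex) gchoose j"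

definition Rz :: "('v \<Rightarrow> 'm \<Rightarrow> int \<Rightarrow> 'm::cvector) \<Rightarrow> int \<Rightarrow> int \<Rightarrow> 'v \<Rightarrow> 'm \<Rightarrow> 'm" where
  "Rz YM s q a w = fsum (\<lambda>j. bn s j *\<^sub>C YM a w (q + int j))"

definition sg :: "int \<Rightarrow> complex" where "sg l = (if even l then 1 else -1)"

locale bor =
  fixes Y :: "'v::cvector \<Rightarrow> 'v \<Rightarrow> int \<Rightarrow> 'v" and YM :: "'v \<Rightarrow> 'm::cvector \<Rightarrow> int \<Rightarrow> 'm"
  assumes trY: "truncation Y" and trM: "truncation YM" and jac: "jacobi Y YM"
    and linM: "\<And>a n. is_clin (\<lambda>w. YM a w n)" and linM1: "\<And>w n. is_clin (\<lambda>a. YM a w n)"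
begin

lemma trM': "\<exists>N. \<forall>n\<ge>N. YM a w n = 0" using trM unfolding truncation_def by blast
lemma trY': "\<exists>N. \<forall>n\<ge>N. Y a b n = 0" using trY unfolding truncation_def by blast

lemma YM_0w [simp]: "YM a 0 n = 0" using is_clin_0[OF linM] .
lemma YM_0a [simp]: "YM 0 w n = 0" using is_clin_0[OF linM1] .

lemma YM_scale: "YM a (c *\<^sub>C w) n = c *\<^sub>C YM a w n" using is_clinD(2)[OF linM] .
lemma YM_add: "YM a (w + w') n = YM a w n + YM a w' n" using is_clinD(1)[OF linM] .

lemma Rz_fin: "fin (\<lambda>j. bn s j *\<^sub>C YM a w (q + int j))"
proof -
  obtain N where N: "\<forall>n\<ge>N. YM a w n = 0" using trM' by blast
  show ?thesis by (rule finI[of "nat (N - q)"]) (simp add: N)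
qed

lemma Rz_vanish: "\<exists>N. \<forall>q\<ge>N. \<forall>s. Rz YM s q a w = 0"
proof -
  obtain N where N: "\<forall>n\<ge>N. YM a w n = 0" using trM' by blast
  show ?thesis
    by (rule exI[of _ N]) (auto simp: Rz_def N intro!: fsum_zero_cond)
qed

lemma Rz_lin: "is_clin (\<lambda>w. Rz YM s q a w)"
  unfolding is_clin_def
proof (intro conjI allI)
  fix x y
  show "Rz YM s q a (x + y) = Rz YM s q a x + Rz YM s q a y"
    unfolding Rz_def YM_add scaleC_add_right by (rule fsum_add[OF Rz_fin Rz_fin])
next
  fix c x
  have "Rz YM s q a (c *\<^sub>C x) = fsum (\<lambda>j. c *\<^sub>C (bn s j *\<^sub>C YM a x (q + int j)))"
    unfolding Rz_def YM_scale by (simp add: mult.commute)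
  also have "\<dots> = c *\<^sub>C Rz YM s q a x"
    unfolding Rz_def by (rule fsum_scaleC[OF Rz_fin, symmetric])
  finally show "Rz YM s q a (c *\<^sub>C x) = c *\<^sub>C Rz YM s q a x" .
qed

lemma Rz_0w [simp]: "Rz YM s q a 0 = 0" using is_clin_0[OF Rz_lin] .
lemma Rz_0a [simp]: "Rz YM s q 0 w = 0" by (simp add: Rz_def)

lemma J1:
  "fsum (\<lambda>i. bn m i *\<^sub>C Rz YM \<sigma> (m + q - int i) (Y a b (l + int i)) w) =
   fsum (\<lambda>i. ((-1)^i * bn l i) *\<^sub>C YM a (Rz YM \<sigma> (q + int i) b w) (m + l - int i)) -
   fsum (\<lambda>i. ((-1)^i * sg l * bn l i) *\<^sub>C Rz YM \<sigma> (q + l - int i) b (YM a w (m + int i)))"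
proof -
  have jt: "\<And>t. fsum (\<lambda>i. bn m i *\<^sub>C YM (Y a b (l + int i)) w (m + (q + int t) - int i)) =
      fsum (\<lambda>i. ((-1)^i * bn l i) *\<^sub>C YM a (YM b w (q + int t + int i)) (m + l - int i)) -
      fsum (\<lambda>i. ((-1)^i * sg l * bn l i) *\<^sub>C YM b (YM a w (m + int i)) (q + int t + l - int i))"
    using jac unfolding jacobi_def sg_def by blast
  obtain Nab where Nab: "\<forall>n\<ge>Nab. Y a b n = 0" using trY' by blast
  obtain Nbw where Nbw: "\<forall>n\<ge>Nbw. YM b w n = 0" using trM' by blast
  obtain Naw where Naw: "\<forall>n\<ge>Naw. YM a w n = 0" using trM' by blast
  define I1 where "I1 = nat (Nab - l)"
  have I1: "\<And>i. i \<ge> I1 \<Longrightarrow> Y a b (l + int i) = 0" using Nab unfolding I1_def by simp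
  obtain D where D: "\<forall>i<I1. \<forall>n\<ge>D. YM (Y a b (l + int i)) w n = 0"
    using unif_bound[of "\<lambda>i n. YM (Y a b (l + int i)) w n = 0"] trM' by blast
  define I3 where "I3 = nat (Naw - m)"
  have I3: "\<And>i. i \<ge> I3 \<Longrightarrow> YM a w (m + int i) = 0" using Naw unfolding I3_def by simp
  obtain E where E: "\<forall>i<I3. \<forall>n\<ge>E. YM b (YM a w (m + int i)) n = 0"
    using unif_bound[of "\<lambda>i n. YM b (YM a w (m + int i)) n = 0"] trM' by blast
  define I2 where "I2 = nat (Nbw - q)"
  have I2: "\<And>t i. t + i \<ge> I2 \<Longrightarrow> YM b w (q + int t + int i) = 0" using Nbw unfolding I2_def by simp

  have T1: "fsum (\<lambda>t. bn \<sigma> t *\<^sub>C fsum (\<lambda>i. bn m i *\<^sub>C YM (Y a b (l + int i)) w (m + (q + int t) - int i)))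
      = fsum (\<lambda>i. bn m i *\<^sub>C Rz YM \<sigma> (m + q - int i) (Y a b (l + int i)) w)"
  proof -
    have "fsum (\<lambda>t. bn \<sigma> t *\<^sub>C fsum (\<lambda>i. bn m i *\<^sub>C YM (Y a b (l + int i)) w (m + (q + int t) - int i)))
       = fsum (\<lambda>t. fsum (\<lambda>i. bn \<sigma> t *\<^sub>C (bn m i *\<^sub>C YM (Y a b (l + int i)) w (m + (q + int t) - int i))))"
      by (rule fsum_cong, rule fsum_scaleC, rule finI[of I1]) (simp add: I1)
    also have "\<dots> = fsum (\<lambda>i. fsum (\<lambda>t. bn \<sigma> t *\<^sub>C (bn m i *\<^sub>C YM (Y a b (l + int i)) w (m + (q + int t) - int i))))"
    proof (rule fsum_swap', rule box_intro'[where J=I1 and I="nat (D - m - q) + I1"])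
      fix t i :: nat assume "I1 \<le> i" then show "bn \<sigma> t *\<^sub>C (bn m i *\<^sub>C YM (Y a b (l + int i)) w (m + (q + int t) - int i)) = 0"
        by (simp add: I1)
    next
      fix t i :: nat assume "i < I1" "nat (D - m - q) + I1 \<le> t"
      then show "bn \<sigma> t *\<^sub>C (bn m i *\<^sub>C YM (Y a b (l + int i)) w (m + (q + int t) - int i)) = 0"
        using D by simp
    qed
    also have "\<dots> = fsum (\<lambda>i. bn m i *\<^sub>C fsum (\<lambda>t. bn \<sigma> t *\<^sub>C YM (Y a b (l + int i)) w (m + q - int i + int t)))"
      by (rule fsum_cong, subst fsum_scaleC[OF Rz_fin], rule fsum_cong) (simp add: algebra_simps)
    finally show ?thesis by (simp add: Rz_def)
  qed
  have T2: "fsum (\<lambda>t. bn \<sigma> t *\<^sub>C fsum (\<lambda>i. ((-1)^i * bn l i) *\<^sub>C YM a (YM b w (q + int t + int i)) (m + l - int i)))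
      = fsum (\<lambda>i. ((-1)^i * bn l i) *\<^sub>C YM a (Rz YM \<sigma> (q + int i) b w) (m + l - int i))"
  proof -
    have "fsum (\<lambda>t. bn \<sigma> t *\<^sub>C fsum (\<lambda>i. ((-1)^i * bn l i) *\<^sub>C YM a (YM b w (q + int t + int i)) (m + l - int i)))
       = fsum (\<lambda>t. fsum (\<lambda>i. bn \<sigma> t *\<^sub>C (((-1)^i * bn l i) *\<^sub>C YM a (YM b w (q + int t + int i)) (m + l - int i))))"
      by (rule fsum_cong, rule fsum_scaleC, rule finI[of I2]) (simp add: I2)
    also have "\<dots> = fsum (\<lambda>i. fsum (\<lambda>t. bn \<sigma> t *\<^sub>C (((-1)^i * bn l i) *\<^sub>C YM a (YM b w (q + int t + int i)) (m + l - int i))))"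
    proof (rule fsum_swap', rule box_intro[where I=I2 and J=I2])
      fix t i :: nat assume "I2 \<le> t" then show "bn \<sigma> t *\<^sub>C (((-1)^i * bn l i) *\<^sub>C YM a (YM b w (q + int t + int i)) (m + l - int i)) = 0"
        by (simp add: I2)
    next
      fix t i :: nat assume "t < I2" "I2 \<le> i"
      then show "bn \<sigma> t *\<^sub>C (((-1)^i * bn l i) *\<^sub>C YM a (YM b w (q + int t + int i)) (m + l - int i)) = 0"
        by (simp add: I2)
    qed
    also have "\<dots> = fsum (\<lambda>i. ((-1)^i * bn l i) *\<^sub>C YM a (Rz YM \<sigma> (q + int i) b w) (m + l - int i))"
    proof (rule fsum_cong)
      fix i
      have fn: "fin (\<lambda>t. YM a (bn \<sigma> t *\<^sub>C YM b w (q + int i + int t)) (m + l - int i))"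
        by (rule fin_mono[OF Rz_fin[of \<sigma> b w "q + int i"]]) (auto simp: YM_scale)
      have "((-1)^i * bn l i) *\<^sub>C YM a (Rz YM \<sigma> (q + int i) b w) (m + l - int i)
          = ((-1)^i * bn l i) *\<^sub>C fsum (\<lambda>t. YM a (bn \<sigma> t *\<^sub>C YM b w (q + int i + int t)) (m + l - int i))"
        unfolding Rz_def by (subst fsum_lin[OF linM Rz_fin]) rule
      also have "\<dots> = fsum (\<lambda>t. ((-1)^i * bn l i) *\<^sub>C YM a (bn \<sigma> t *\<^sub>C YM b w (q + int i + int t)) (m + l - int i))"
        by (rule fsum_scaleC[OF fn])
      also have "\<dots> = fsum (\<lambda>t. bn \<sigma> t *\<^sub>C (((-1)^i * bn l i) *\<^sub>C YM a (YM b w (q + int t + int i)) (m + l - int i)))"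
        by (rule fsum_cong) (simp add: YM_scale algebra_simps)
      finally show "fsum (\<lambda>t. bn \<sigma> t *\<^sub>C (((-1)^i * bn l i) *\<^sub>C YM a (YM b w (q + int t + int i)) (m + l - int i)))
          = ((-1)^i * bn l i) *\<^sub>C YM a (Rz YM \<sigma> (q + int i) b w) (m + l - int i)" by simp
    qed
    finally show ?thesis .
  qed
  have T3: "fsum (\<lambda>t. bn \<sigma> t *\<^sub>C fsum (\<lambda>i. ((-1)^i * sg l * bn l i) *\<^sub>C YM b (YM a w (m + int i)) (q + int t + l - int i)))
      = fsum (\<lambda>i. ((-1)^i * sg l * bn l i) *\<^sub>C Rz YM \<sigma> (q + l - int i) b (YM a w (m + int i)))"
  proof -
    have "fsum (\<lambda>t. bn \<sigma> t *\<^sub>C fsum (\<lambda>i. ((-1)^i * sg l * bn l i) *\<^sub>C YM b (YM a w (m + int i)) (q + int t + l - int i)))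
       = fsum (\<lambda>t. fsum (\<lambda>i. bn \<sigma> t *\<^sub>C (((-1)^i * sg l * bn l i) *\<^sub>C YM b (YM a w (m + int i)) (q + int t + l - int i))))"
      by (rule fsum_cong, rule fsum_scaleC, rule finI[of I3]) (simp add: I3)
    also have "\<dots> = fsum (\<lambda>i. fsum (\<lambda>t. bn \<sigma> t *\<^sub>C (((-1)^i * sg l * bn l i) *\<^sub>C YM b (YM a w (m + int i)) (q + int t + l - int i))))"
    proof (rule fsum_swap', rule box_intro'[where J=I3 and I="nat (E - q - l) + I3"])
      fix t i :: nat assume "I3 \<le> i" then show "bn \<sigma> t *\<^sub>C (((-1)^i * sg l * bn l i) *\<^sub>C YM b (YM a w (m + int i)) (q + int t + l - int i)) = 0"
        by (simp add: I3)
    next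
      fix t i :: nat assume "i < I3" "nat (E - q - l) + I3 \<le> t"
      then show "bn \<sigma> t *\<^sub>C (((-1)^i * sg l * bn l i) *\<^sub>C YM b (YM a w (m + int i)) (q + int t + l - int i)) = 0"
        using E by simp
    qed
    also have "\<dots> = fsum (\<lambda>i. ((-1)^i * sg l * bn l i) *\<^sub>C fsum (\<lambda>t. bn \<sigma> t *\<^sub>C YM b (YM a w (m + int i)) (q + l - int i + int t)))"
      by (rule fsum_cong, subst fsum_scaleC[OF Rz_fin], rule fsum_cong) (simp add: algebra_simps)
    finally show ?thesis by (simp add: Rz_def)
  qed
  have F2: "fin (\<lambda>t. bn \<sigma> t *\<^sub>C fsum (\<lambda>i. ((-1)^i * bn l i) *\<^sub>C YM a (YM b w (q + int t + int i)) (m + l - int i)))"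
    by (rule finI[of I2], subst fsum_zero_cond) (simp_all add: I2)
  have F3: "fin (\<lambda>t. bn \<sigma> t *\<^sub>C fsum (\<lambda>i. ((-1)^i * sg l * bn l i) *\<^sub>C YM b (YM a w (m + int i)) (q + int t + l - int i)))"
  proof (rule finI[of "nat (E - q - l) + I3"], subst fsum_zero_cond)
    fix t i :: nat assume t: "nat (E - q - l) + I3 \<le> t"
    show "((-1)^i * sg l * bn l i) *\<^sub>C YM b (YM a w (m + int i)) (q + int t + l - int i) = 0"
    proof (cases "i < I3")
      case True then show ?thesis using E t by simp
    next
      case False then show ?thesis by (simp add: I3)
    qed
  qed simp
  have "fsum (\<lambda>i. bn m i *\<^sub>C Rz YM \<sigma> (m + q - int i) (Y a b (l + int i)) w)
     = fsum (\<lambda>t. bn \<sigma> t *\<^sub>C fsum (\<lambda>i. ((-1)^i * bn l i) *\<^sub>C YM a (YM b w (q + int t + int i)) (m + l - int i))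
           - bn \<sigma> t *\<^sub>C fsum (\<lambda>i. ((-1)^i * sg l * bn l i) *\<^sub>C YM b (YM a w (m + int i)) (q + int t + l - int i)))"
    unfolding T1[symmetric] jt scaleC_diff_right ..
  also have "\<dots> = fsum (\<lambda>i. ((-1)^i * bn l i) *\<^sub>C YM a (Rz YM \<sigma> (q + int i) b w) (m + l - int i)) -
   fsum (\<lambda>i. ((-1)^i * sg l * bn l i) *\<^sub>C Rz YM \<sigma> (q + l - int i) b (YM a w (m + int i)))"
    unfolding fsum_diff[OF F2 F3] T2 T3 ..
  finally show ?thesis .
qed

lemma Rz_mult:
  "Rz YM (\<sigma> + \<tau>) q d w = fsum (\<lambda>u. bn \<tau> u *\<^sub>C Rz YM \<sigma> (q + int u) d w)"
proof -
  obtain N where N: "\<forall>n\<ge>N. YM d w n = 0" using trM' by blast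
  have "fsum (\<lambda>u. bn \<tau> u *\<^sub>C Rz YM \<sigma> (q + int u) d w)
      = fsum (\<lambda>u. fsum (\<lambda>t. (bn \<tau> u * bn \<sigma> t) *\<^sub>C YM d w (q + int u + int t)))"
    unfolding Rz_def by (rule fsum_cong, subst fsum_scaleC[OF Rz_fin]) simp
  also have "\<dots> = fsum (\<lambda>s. \<Sum>u\<le>s. (bn \<tau> u * bn \<sigma> (s - u)) *\<^sub>C YM d w (q + int u + int (s - u)))"
  proof (rule fsum_triangle[where N="nat (N - q)"])
    fix u t assume "(bn \<tau> u * bn \<sigma> t) *\<^sub>C YM d w (q + int u + int t) \<noteq> 0"
    then have "q + int u + int t < N"
    proof (rule contrapos_np)
      assume "\<not> q + int u + int t < N"
      then show "(bn \<tau> u * bn \<sigma> t) *\<^sub>C YM d w (q + int u + int t) = 0" using N by simp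
    qed
    then show "u + t < nat (N - q)" by simp
  qed
  also have "\<dots> = fsum (\<lambda>s. (\<Sum>u\<le>s. bn \<tau> u * bn \<sigma> (s - u)) *\<^sub>C YM d w (q + int s))"
    by (rule fsum_cong) (simp add: scaleC_sum_left)
  also have "\<dots> = Rz YM (\<sigma> + \<tau>) q d w"
    unfolding Rz_def
  proof (rule fsum_cong)
    fix s
    have "(\<Sum>u\<le>s. bn \<tau> u * bn \<sigma> (s - u)) = bn (\<sigma> + \<tau>) s"
      using gbinomial_Vandermonde[of "of_int \<tau> :: complex" "of_int \<sigma>" s]
      by (simp add: atMost_atLeast0 add.commute)
    then show "(\<Sum>u\<le>s. bn \<tau> u * bn \<sigma> (s - u)) *\<^sub>C YM d w (q + int s) = bn (\<sigma> + \<tau>) s *\<^sub>C YM d w (q + int s)"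
      by simp
  qed
  finally show ?thesis ..
qed

lemma JC:
  "fsum (\<lambda>i. bn m i *\<^sub>C Rz YM \<sigma> (m + q - int i) (Y a b (int i)) w) =
   YM a (Rz YM \<sigma> q b w) m - Rz YM \<sigma> q b (YM a w m)"
proof -
  have "fsum (\<lambda>i. ((-1)^i * bn 0 i) *\<^sub>C YM a (Rz YM \<sigma> (q + int i) b w) (m + 0 - int i)) = YM a (Rz YM \<sigma> q b w) m"
    by (subst fsum_single[where k=0]) (auto simp: gbinomial_0_left)
  moreover have "fsum (\<lambda>i. ((-1)^i * sg 0 * bn 0 i) *\<^sub>C Rz YM \<sigma> (q + 0 - int i) b (YM a w (m + int i))) = Rz YM \<sigma> q b (YM a w m)"
    by (subst fsum_single[where k=0]) (auto simp: gbinomial_0_left sg_def)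
  ultimately show ?thesis using J1[of m \<sigma> q a b 0 w] by simp
qed

lemma Rz_vanish_unif: "\<exists>N. \<forall>i<(I::nat). \<forall>q\<ge>N. \<forall>s. Rz YM s q (f i) (g i) = 0"
  using unif_bound[of "\<lambda>i q. \<forall>s. Rz YM s q (f i) (g i) = 0"] Rz_vanish by blast

lemma JB:
  "fsum (\<lambda>i. bn \<kappa> i *\<^sub>C Rz YM (\<sigma> + \<kappa> - int i) q (Y a b (l + int i)) w) =
   fsum (\<lambda>i. ((-1)^i * bn l i) *\<^sub>C Rz YM \<kappa> (l - int i) a (Rz YM \<sigma> (q + int i) b w)) -
   fsum (\<lambda>i. ((-1)^i * sg l * bn l i) *\<^sub>C Rz YM \<sigma> (q + l - int i) b (Rz YM \<kappa> (int i) a w))"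
proof -
  obtain Nab where Nab: "\<forall>n\<ge>Nab. Y a b n = 0" using trY' by blast
  obtain Nbw where Nbw: "\<forall>q'\<ge>Nbw. \<forall>s. Rz YM s q' b w = 0" using Rz_vanish by blast
  obtain Naw where Naw: "\<forall>n\<ge>Naw. YM a w n = 0" using trM' by blast
  define I1 where "I1 = nat (Nab - l)"
  have I1: "\<And>i. i \<ge> I1 \<Longrightarrow> Y a b (l + int i) = 0" using Nab unfolding I1_def by simp
  obtain D where D: "\<forall>i<I1. \<forall>q'\<ge>D. \<forall>s. Rz YM s q' (Y a b (l + int i)) w = 0"
    using Rz_vanish_unif[of I1 "\<lambda>i. Y a b (l + int i)" "\<lambda>i. w"] by blast
  define I2 where "I2 = nat (Nbw - q)"
  have I2: "\<And>i s. i \<ge> I2 \<Longrightarrow> Rz YM s (q + int i) b w = 0" using Nbw unfolding I2_def by simp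
  obtain E where E: "\<forall>i<I2. \<forall>n\<ge>E. YM a (Rz YM \<sigma> (q + int i) b w) n = 0"
    using unif_bound[of "\<lambda>i n. YM a (Rz YM \<sigma> (q + int i) b w) n = 0"] trM' by blast
  define I3 where "I3 = nat Naw"
  have I3: "\<And>i j. i + j \<ge> I3 \<Longrightarrow> YM a w (int j + int i) = 0" using Naw unfolding I3_def by simp
  have jt: "\<And>j. fsum (\<lambda>i. bn (int j) i *\<^sub>C Rz YM \<sigma> (int j + q - int i) (Y a b (l + int i)) w) =
   fsum (\<lambda>i. ((-1)^i * bn l i) *\<^sub>C YM a (Rz YM \<sigma> (q + int i) b w) (int j + l - int i)) -
   fsum (\<lambda>i. ((-1)^i * sg l * bn l i) *\<^sub>C Rz YM \<sigma> (q + l - int i) b (YM a w (int j + int i)))"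
    by (rule J1)
  have T1: "fsum (\<lambda>j. bn \<kappa> j *\<^sub>C fsum (\<lambda>i. bn (int j) i *\<^sub>C Rz YM \<sigma> (int j + q - int i) (Y a b (l + int i)) w))
     = fsum (\<lambda>i. bn \<kappa> i *\<^sub>C Rz YM (\<sigma> + \<kappa> - int i) q (Y a b (l + int i)) w)"
  proof -
    have "fsum (\<lambda>j. bn \<kappa> j *\<^sub>C fsum (\<lambda>i. bn (int j) i *\<^sub>C Rz YM \<sigma> (int j + q - int i) (Y a b (l + int i)) w))
      = fsum (\<lambda>j. fsum (\<lambda>i. bn \<kappa> j *\<^sub>C (bn (int j) i *\<^sub>C Rz YM \<sigma> (int j + q - int i) (Y a b (l + int i)) w)))"
      by (rule fsum_cong, rule fsum_scaleC, rule finI[of I1]) (simp add: I1)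
    also have "\<dots> = fsum (\<lambda>i. fsum (\<lambda>j. bn \<kappa> j *\<^sub>C (bn (int j) i *\<^sub>C Rz YM \<sigma> (int j + q - int i) (Y a b (l + int i)) w)))"
    proof (rule fsum_swap', rule box_intro'[where J=I1 and I="nat (D - q) + I1"])
      fix j i :: nat assume "I1 \<le> i" then show "bn \<kappa> j *\<^sub>C (bn (int j) i *\<^sub>C Rz YM \<sigma> (int j + q - int i) (Y a b (l + int i)) w) = 0"
        by (simp add: I1)
    next
      fix j i :: nat assume "i < I1" "nat (D - q) + I1 \<le> j"
      then show "bn \<kappa> j *\<^sub>C (bn (int j) i *\<^sub>C Rz YM \<sigma> (int j + q - int i) (Y a b (l + int i)) w) = 0"
        using D by simp
    qed
    also have "\<dots> = fsum (\<lambda>i. bn \<kappa> i *\<^sub>C Rz YM (\<sigma> + \<kappa> - int i) q (Y a b (l + int i)) w)"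
    proof (rule fsum_cong)
      fix i
      define d where "d = Y a b (l + int i)"
      obtain Nd where Nd: "\<forall>q'\<ge>Nd. \<forall>s. Rz YM s q' d w = 0" using Rz_vanish by blast
      have "fsum (\<lambda>j. bn \<kappa> j *\<^sub>C (bn (int j) i *\<^sub>C Rz YM \<sigma> (int j + q - int i) d w))
          = fsum (\<lambda>u. bn \<kappa> (i + u) *\<^sub>C (bn (int (i + u)) i *\<^sub>C Rz YM \<sigma> (int (i + u) + q - int i) d w))"
      proof (rule fsum_shift)
        fix j assume "j < i"
        then show "bn \<kappa> j *\<^sub>C (bn (int j) i *\<^sub>C Rz YM \<sigma> (int j + q - int i) d w) = 0"
          by (simp add: binomial_gbinomial[symmetric])
      next
        show "fin (\<lambda>j. bn \<kappa> j *\<^sub>C (bn (int j) i *\<^sub>C Rz YM \<sigma> (int j + q - int i) d w))"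
          by (rule finI[of "nat (Nd - q) + i"]) (simp add: Nd)
      qed
      also have "\<dots> = fsum (\<lambda>u. bn \<kappa> i *\<^sub>C (bn (\<kappa> - int i) u *\<^sub>C Rz YM \<sigma> (q + int u) d w))"
      proof (rule fsum_cong)
        fix u
        have "bn \<kappa> (i + u) * bn (int (i + u)) i = bn \<kappa> i * bn (\<kappa> - int i) u"
          using gbinomial_trinomial_revision[of i "i + u" "of_int \<kappa> :: complex"] by simp
        then show "bn \<kappa> (i + u) *\<^sub>C (bn (int (i + u)) i *\<^sub>C Rz YM \<sigma> (int (i + u) + q - int i) d w)
           = bn \<kappa> i *\<^sub>C (bn (\<kappa> - int i) u *\<^sub>C Rz YM \<sigma> (q + int u) d w)"
          by (simp add: algebra_simps)
      qed
      also have "\<dots> = bn \<kappa> i *\<^sub>C Rz YM (\<sigma> + (\<kappa> - int i)) q d w"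
        unfolding Rz_mult
        by (rule fsum_scaleC[symmetric], rule finI[of "nat (Nd - q)"]) (simp add: Nd)
      finally show "fsum (\<lambda>j. bn \<kappa> j *\<^sub>C (bn (int j) i *\<^sub>C Rz YM \<sigma> (int j + q - int i) (Y a b (l + int i)) w))
          = bn \<kappa> i *\<^sub>C Rz YM (\<sigma> + \<kappa> - int i) q (Y a b (l + int i)) w"
        unfolding d_def by (simp add: algebra_simps)
    qed
    finally show ?thesis .
  qed
  have T2: "fsum (\<lambda>j. bn \<kappa> j *\<^sub>C fsum (\<lambda>i. ((-1)^i * bn l i) *\<^sub>C YM a (Rz YM \<sigma> (q + int i) b w) (int j + l - int i)))
     = fsum (\<lambda>i. ((-1)^i * bn l i) *\<^sub>C Rz YM \<kappa> (l - int i) a (Rz YM \<sigma> (q + int i) b w))"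
  proof -
    have "fsum (\<lambda>j. bn \<kappa> j *\<^sub>C fsum (\<lambda>i. ((-1)^i * bn l i) *\<^sub>C YM a (Rz YM \<sigma> (q + int i) b w) (int j + l - int i)))
      = fsum (\<lambda>j. fsum (\<lambda>i. bn \<kappa> j *\<^sub>C (((-1)^i * bn l i) *\<^sub>C YM a (Rz YM \<sigma> (q + int i) b w) (int j + l - int i))))"
      by (rule fsum_cong, rule fsum_scaleC, rule finI[of I2]) (simp add: I2)
    also have "\<dots> = fsum (\<lambda>i. fsum (\<lambda>j. bn \<kappa> j *\<^sub>C (((-1)^i * bn l i) *\<^sub>C YM a (Rz YM \<sigma> (q + int i) b w) (int j + l - int i))))"
    proof (rule fsum_swap', rule box_intro'[where J=I2 and I="nat (E - l) + I2"])
      fix j i :: nat assume "I2 \<le> i" then show "bn \<kappa> j *\<^sub>C (((-1)^i * bn l i) *\<^sub>C YM a (Rz YM \<sigma> (q + int i) b w) (int j + l - int i)) = 0"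
        by (simp add: I2)
    next
      fix j i :: nat assume "i < I2" "nat (E - l) + I2 \<le> j"
      then show "bn \<kappa> j *\<^sub>C (((-1)^i * bn l i) *\<^sub>C YM a (Rz YM \<sigma> (q + int i) b w) (int j + l - int i)) = 0"
        using E by simp
    qed
    also have "\<dots> = fsum (\<lambda>i. ((-1)^i * bn l i) *\<^sub>C fsum (\<lambda>j. bn \<kappa> j *\<^sub>C YM a (Rz YM \<sigma> (q + int i) b w) (l - int i + int j)))"
      by (rule fsum_cong, subst fsum_scaleC[OF Rz_fin], rule fsum_cong) (simp add: algebra_simps)
    finally show ?thesis by (simp add: Rz_def)
  qed
  have T3: "fsum (\<lambda>j. bn \<kappa> j *\<^sub>C fsum (\<lambda>i. ((-1)^i * sg l * bn l i) *\<^sub>C Rz YM \<sigma> (q + l - int i) b (YM a w (int j + int i))))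
     = fsum (\<lambda>i. ((-1)^i * sg l * bn l i) *\<^sub>C Rz YM \<sigma> (q + l - int i) b (Rz YM \<kappa> (int i) a w))"
  proof -
    have "fsum (\<lambda>j. bn \<kappa> j *\<^sub>C fsum (\<lambda>i. ((-1)^i * sg l * bn l i) *\<^sub>C Rz YM \<sigma> (q + l - int i) b (YM a w (int j + int i))))
      = fsum (\<lambda>j. fsum (\<lambda>i. bn \<kappa> j *\<^sub>C (((-1)^i * sg l * bn l i) *\<^sub>C Rz YM \<sigma> (q + l - int i) b (YM a w (int j + int i)))))"
      by (rule fsum_cong, rule fsum_scaleC, rule finI[of I3]) (simp add: I3)
    also have "\<dots> = fsum (\<lambda>i. fsum (\<lambda>j. bn \<kappa> j *\<^sub>C (((-1)^i * sg l * bn l i) *\<^sub>C Rz YM \<sigma> (q + l - int i) b (YM a w (int j + int i)))))"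
    proof (rule fsum_swap', rule box_intro[where J=I3 and I=I3])
      fix j i :: nat assume "I3 \<le> j" then show "bn \<kappa> j *\<^sub>C (((-1)^i * sg l * bn l i) *\<^sub>C Rz YM \<sigma> (q + l - int i) b (YM a w (int j + int i))) = 0"
        by (simp add: I3)
    next
      fix j i :: nat assume "j < I3" "I3 \<le> i"
      then show "bn \<kappa> j *\<^sub>C (((-1)^i * sg l * bn l i) *\<^sub>C Rz YM \<sigma> (q + l - int i) b (YM a w (int j + int i))) = 0"
        by (simp add: I3)
    qed
    also have "\<dots> = fsum (\<lambda>i. ((-1)^i * sg l * bn l i) *\<^sub>C Rz YM \<sigma> (q + l - int i) b (Rz YM \<kappa> (int i) a w))"
    proof (rule fsum_cong)
      fix i
      have fn: "fin (\<lambda>j. Rz YM \<sigma> (q + l - int i) b (bn \<kappa> j *\<^sub>C YM a w (int i + int j)))"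
        by (rule fin_mono[OF Rz_fin[of \<kappa> a w "int i"]]) (auto simp: is_clinD[OF Rz_lin])
      have "((-1)^i * sg l * bn l i) *\<^sub>C Rz YM \<sigma> (q + l - int i) b (Rz YM \<kappa> (int i) a w)
          = ((-1)^i * sg l * bn l i) *\<^sub>C fsum (\<lambda>j. Rz YM \<sigma> (q + l - int i) b (bn \<kappa> j *\<^sub>C YM a w (int i + int j)))"
        by (subst (2) Rz_def, subst fsum_lin[OF Rz_lin Rz_fin]) rule
      also have "\<dots> = fsum (\<lambda>j. ((-1)^i * sg l * bn l i) *\<^sub>C Rz YM \<sigma> (q + l - int i) b (bn \<kappa> j *\<^sub>C YM a w (int i + int j)))"
        by (rule fsum_scaleC[OF fn])
      also have "\<dots> = fsum (\<lambda>j. bn \<kappa> j *\<^sub>C (((-1)^i * sg l * bn l i) *\<^sub>C Rz YM \<sigma> (q + l - int i) b (YM a w (int j + int i))))"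
        by (rule fsum_cong) (simp add: is_clinD[OF Rz_lin] algebra_simps)
      finally show "fsum (\<lambda>j. bn \<kappa> j *\<^sub>C (((-1)^i * sg l * bn l i) *\<^sub>C Rz YM \<sigma> (q + l - int i) b (YM a w (int j + int i))))
         = ((-1)^i * sg l * bn l i) *\<^sub>C Rz YM \<sigma> (q + l - int i) b (Rz YM \<kappa> (int i) a w)" by simp
    qed
    finally show ?thesis .
  qed
  have F2: "fin (\<lambda>j. bn \<kappa> j *\<^sub>C fsum (\<lambda>i. ((-1)^i * bn l i) *\<^sub>C YM a (Rz YM \<sigma> (q + int i) b w) (int j + l - int i)))"
  proof (rule finI[of "nat (E - l) + I2"], subst fsum_zero_cond)
    fix j i :: nat assume j: "nat (E - l) + I2 \<le> j"
    show "((-1)^i * bn l i) *\<^sub>C YM a (Rz YM \<sigma> (q + int i) b w) (int j + l - int i) = 0"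
    proof (cases "i < I2")
      case True then show ?thesis using E j by simp
    next
      case False then show ?thesis by (simp add: I2)
    qed
  qed simp
  have F3: "fin (\<lambda>j. bn \<kappa> j *\<^sub>C fsum (\<lambda>i. ((-1)^i * sg l * bn l i) *\<^sub>C Rz YM \<sigma> (q + l - int i) b (YM a w (int j + int i))))"
    by (rule finI[of I3], subst fsum_zero_cond) (simp_all add: I3)
  have "fsum (\<lambda>i. bn \<kappa> i *\<^sub>C Rz YM (\<sigma> + \<kappa> - int i) q (Y a b (l + int i)) w)
     = fsum (\<lambda>j. bn \<kappa> j *\<^sub>C fsum (\<lambda>i. ((-1)^i * bn l i) *\<^sub>C YM a (Rz YM \<sigma> (q + int i) b w) (int j + l - int i))
        - bn \<kappa> j *\<^sub>C fsum (\<lambda>i. ((-1)^i * sg l * bn l i) *\<^sub>C Rz YM \<sigma> (q + l - int i) b (YM a w (int j + int i))))"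
    unfolding T1[symmetric] jt scaleC_diff_right ..
  also have "\<dots> = fsum (\<lambda>i. ((-1)^i * bn l i) *\<^sub>C Rz YM \<kappa> (l - int i) a (Rz YM \<sigma> (q + int i) b w)) -
   fsum (\<lambda>i. ((-1)^i * sg l * bn l i) *\<^sub>C Rz YM \<sigma> (q + l - int i) b (Rz YM \<kappa> (int i) a w))"
    unfolding fsum_diff[OF F2 F3] T2 T3 ..
  finally show ?thesis .
qed

lemma comm:
  "YM a (YM b w n) m - YM b (YM a w m) n = fsum (\<lambda>i. bn m i *\<^sub>C YM (Y a b (int i)) w (m + n - int i))"
proof -
  have "fsum (\<lambda>i. ((-1)^i * bn 0 i) *\<^sub>C YM a (YM b w (n + int i)) (m + 0 - int i)) = YM a (YM b w n) m"
    by (subst fsum_single[where k=0]) (auto simp: gbinomial_0_left)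
  moreover have "fsum (\<lambda>i. ((-1)^i * (if even (0::int) then 1 else -1) * bn 0 i) *\<^sub>C YM b (YM a w (m + int i)) (n + 0 - int i)) = YM b (YM a w m) n"
    by (subst fsum_single[where k=0]) (auto simp: gbinomial_0_left)
  moreover have "fsum (\<lambda>i. bn m i *\<^sub>C YM (Y a b (0 + int i)) w (m + n - int i)) =
     fsum (\<lambda>i. ((-1)^i * bn 0 i) *\<^sub>C YM a (YM b w (n + int i)) (m + 0 - int i)) -
     fsum (\<lambda>i. ((-1)^i * (if even (0::int) then 1 else -1) * bn 0 i) *\<^sub>C YM b (YM a w (m + int i)) (n + 0 - int i))"
    using jac unfolding jacobi_def by blast
  ultimately show ?thesis by simp
qed

end

lemma sum_if_extend:
  "finite T \<Longrightarrow> S \<subseteq> T \<Longrightarrow> sum (\<lambda>x. if x \<in> S then f x else 0) T = sum f S"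
  by (rule sum.mono_neutral_cong_right) auto

lemma bn_1: "bn 1 i = (if i \<le> 1 then 1 else 0)"
proof -
  have "bn 1 i = of_nat (1 choose i)" using binomial_gbinomial[of 1 i, where 'a=complex] by simp
  then show ?thesis by (cases i) (auto simp: binomial_eq_0)
qed

lemma gchoose_one: "(1::complex) gchoose i = (if i \<le> 1 then 1 else 0)"
  using bn_1[of i] by simp

locale qv =
  fixes Y :: "'v::cvector \<Rightarrow> 'v \<Rightarrow> int \<Rightarrow> 'v" and vac \<omega> :: 'v and cc :: complex
  assumes VOA: "qVOA Y vac \<omega> cc"
begin

abbreviation V where "V \<alpha> \<equiv> Vg Y \<omega> \<alpha>"

lemma linA: "is_clin (\<lambda>a. Y a b n)"
proof -
  have "\<forall>b n. is_clin (\<lambda>a. Y a b n)" using VOA unfolding qVOA_def by (elim conjE)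
  then show ?thesis by blast
qed
lemma linB: "is_clin (\<lambda>b. Y a b n)" using VOA unfolding qVOA_def by blast
lemma decomp: "\<exists>S f. finite S \<and> (\<forall>\<alpha>\<in>S. f \<alpha> \<in> V \<alpha>) \<and> v = sum f S" using VOA unfolding qVOA_def by blast
lemma qtrY: "truncation Y" using VOA unfolding qVOA_def by blast
lemma vacY: "Y vac b n = (if n = -1 then b else 0)" using VOA unfolding qVOA_def by blast
lemma creat0: "n \<ge> 0 \<Longrightarrow> Y a vac n = 0" using VOA unfolding qVOA_def by blast
lemma creat1: "Y a vac (-1) = a" using VOA unfolding qVOA_def by blast
lemma jacY: "jacobi Y Y" using VOA unfolding qVOA_def by blast
lemma omega_V: "\<omega> \<in> V 2" using VOA unfolding qVOA_def by blast
lemma deriv: "Y (Y \<omega> a 0) b n = - (of_int n *\<^sub>C Y a b (n - 1))" using VOA unfolding qVOA_def by blast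

sublocale bor Y Y
  by unfold_locales (auto simp: qtrY jacY linA linB)

lemma YA_scale: "Y (c *\<^sub>C a) b n = c *\<^sub>C Y a b n" using is_clinD(2)[OF linA] .
lemma YA_add: "Y (a + a') b n = Y a b n + Y a' b n" using is_clinD(1)[OF linA] .
lemma YA_diff: "Y (a - a') b n = Y a b n - Y a' b n" using is_clin_diff[OF linA] .
lemma YA_minus: "Y (- a) b n = - Y a b n" using is_clin_minus[OF linA] .
lemma YB_diff: "Y a (b - b') n = Y a b n - Y a b' n" using is_clin_diff[OF linB] .
lemma YB_minus: "Y a (- b) n = - Y a b n" using is_clin_minus[OF linB] .

lemma V_iff: "a \<in> V \<alpha> \<longleftrightarrow> Y \<omega> a 1 = of_rat \<alpha> *\<^sub>C a" by (simp add: Vg_def)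
lemma V_0 [simp]: "0 \<in> V \<alpha>" by (simp add: V_iff)
lemma V_add: "a \<in> V \<alpha> \<Longrightarrow> b \<in> V \<alpha> \<Longrightarrow> a + b \<in> V \<alpha>" by (simp add: V_iff YM_add scaleC_add_right)
lemma V_scale: "a \<in> V \<alpha> \<Longrightarrow> c *\<^sub>C a \<in> V \<alpha>" by (simp add: V_iff YM_scale mult.commute)
lemma V_diff: "a \<in> V \<alpha> \<Longrightarrow> b \<in> V \<alpha> \<Longrightarrow> a - b \<in> V \<alpha>" by (simp add: V_iff YB_diff scaleC_diff_right)

lemma wt: "a \<in> V \<alpha> \<Longrightarrow> b \<in> V \<beta> \<Longrightarrow> Y a b n \<in> V (\<alpha> + \<beta> - of_int n - 1)"
proof -
  assume a: "a \<in> V \<alpha>" and b: "b \<in> V \<beta>"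
  have c: "Y \<omega> (Y a b n) 1 - Y a (Y \<omega> b 1) n = fsum (\<lambda>i. bn 1 i *\<^sub>C Y (Y \<omega> a (int i)) b (1 + n - int i))"
    by (rule comm)
  have "fsum (\<lambda>i. bn 1 i *\<^sub>C Y (Y \<omega> a (int i)) b (1 + n - int i)) = (\<Sum>i\<in>{0,1}. bn 1 i *\<^sub>C Y (Y \<omega> a (int i)) b (1 + n - int i))"
    by (rule fsum_superset) (auto simp: gchoose_one)
  also have "\<dots> = Y (Y \<omega> a 0) b (1 + n) + Y (Y \<omega> a 1) b n" by (simp add: gchoose_one)
  also have "\<dots> = - (of_int (1 + n) *\<^sub>C Y a b n) + of_rat \<alpha> *\<^sub>C Y a b n"
    using a by (simp add: deriv V_iff YA_scale)
  finally have "Y \<omega> (Y a b n) 1 = of_rat \<beta> *\<^sub>C Y a b n - (of_int (1 + n) *\<^sub>C Y a b n) + of_rat \<alpha> *\<^sub>C Y a b n"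
    using c b by (simp add: V_iff YM_scale algebra_simps)
  also have "\<dots> = of_rat (\<alpha> + \<beta> - of_int n - 1) *\<^sub>C Y a b n"
    by (simp add: of_rat_add of_rat_diff scaleC_add_left scaleC_diff_left algebra_simps)
  finally show ?thesis by (simp add: V_iff)
qed

lemma LV: "a \<in> V \<alpha> \<Longrightarrow> Y \<omega> a 0 \<in> V (\<alpha> + 1)"
  using wt[OF omega_V, of a \<alpha> 0] by (simp add: algebra_simps)

lemma vac_V: "vac \<in> V 0" by (simp add: V_iff creat0)

lemma indep:
  assumes "finite S" "\<forall>\<alpha>\<in>S. g \<alpha> \<in> V \<alpha>" "sum g S = 0"
  shows "\<forall>\<alpha>\<in>S. g \<alpha> = 0"
  using assms
proof (induct S arbitrary: g rule: finite_induct)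
  case (insert \<beta> S)
  define h where "h \<alpha> = (of_rat \<alpha> - of_rat \<beta>) *\<^sub>C g \<alpha>" for \<alpha>
  have gb: "g \<beta> = - sum g S" using insert by (simp add: eq_neg_iff_add_eq_0)
  have L: "Y \<omega> (sum g S) 1 = (\<Sum>\<alpha>\<in>S. of_rat \<alpha> *\<^sub>C g \<alpha>)"
    using insert by (simp add: is_clin_sum[OF linB] V_iff)
  have "Y \<omega> (g \<beta>) 1 = of_rat \<beta> *\<^sub>C g \<beta>" using insert by (simp add: V_iff)
  then have "Y \<omega> (sum g S) 1 = of_rat \<beta> *\<^sub>C sum g S"
    using gb by (simp add: YB_minus scaleC_minus_right)
  then have "sum h S = 0"
    unfolding h_def using L by (simp add: scaleC_diff_left sum_subtractf scaleC_sum_right)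
  moreover have "\<forall>\<alpha>\<in>S. h \<alpha> \<in> V \<alpha>" using insert by (simp add: h_def V_scale)
  ultimately have "\<forall>\<alpha>\<in>S. h \<alpha> = 0" using insert by blast
  then have "\<forall>\<alpha>\<in>S. g \<alpha> = 0" using insert by (auto simp: h_def)
  then show ?case using gb by simp
qed simp

lemma hcomp_eq:
  assumes S: "finite S" "\<forall>\<beta>\<in>S. f \<beta> \<in> V \<beta>"
  shows "hcomp Y \<omega> \<alpha> (sum f S) = (if \<alpha> \<in> S then f \<alpha> else 0)"
  unfolding hcomp_def
proof (rule the_equality)
  show "\<exists>S' f'. finite S' \<and> (\<forall>\<beta>\<in>S'. f' \<beta> \<in> V \<beta>) \<and> sum f S = sum f' S' \<and> (if \<alpha> \<in> S then f \<alpha> else 0) = (if \<alpha> \<in> S' then f' \<alpha> else 0)"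
    using S by blast
next
  fix w assume "\<exists>S' f'. finite S' \<and> (\<forall>\<beta>\<in>S'. f' \<beta> \<in> V \<beta>) \<and> sum f S = sum f' S' \<and> w = (if \<alpha> \<in> S' then f' \<alpha> else 0)"
  then obtain S' f' where S': "finite S'" "\<forall>\<beta>\<in>S'. f' \<beta> \<in> V \<beta>" "sum f S = sum f' S'" "w = (if \<alpha> \<in> S' then f' \<alpha> else 0)"
    by blast
  define g where "g \<beta> = (if \<beta> \<in> S then f \<beta> else 0) - (if \<beta> \<in> S' then f' \<beta> else 0)" for \<beta>
  have "sum g (S \<union> S') = sum f S - sum f' S'"
    unfolding g_def sum_subtractf using S S' by (simp add: sum_if_extend)
  then have "sum g (S \<union> S') = 0" using S' by simp
  moreover have "\<forall>\<beta>\<in>S \<union> S'. g \<beta> \<in> V \<beta>" using S S' by (auto simp: g_def V_diff)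
  ultimately have "\<forall>\<beta>\<in>S \<union> S'. g \<beta> = 0" using indep S S' by (meson finite_UnI)
  then show "w = (if \<alpha> \<in> S then f \<alpha> else 0)"
    using S'(4) by (cases "\<alpha> \<in> S \<union> S'") (auto simp: g_def split: if_splits)
qed

definition supp where "supp v = {\<alpha>. hcomp Y \<omega> \<alpha> v \<noteq> 0}"

lemma hcomp_basic: "finite (supp v) \<and> (\<forall>\<alpha>. hcomp Y \<omega> \<alpha> v \<in> V \<alpha>) \<and> v = (\<Sum>\<alpha>\<in>supp v. hcomp Y \<omega> \<alpha> v)"
proof -
  obtain S f where S: "finite S" "\<forall>\<alpha>\<in>S. f \<alpha> \<in> V \<alpha>" "v = sum f S" using decomp by blast
  have h: "hcomp Y \<omega> \<alpha> v = (if \<alpha> \<in> S then f \<alpha> else 0)" for \<alpha> using hcomp_eq S by simp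
  have ss: "supp v \<subseteq> S" by (auto simp: supp_def h split: if_splits)
  have "(\<Sum>\<alpha>\<in>supp v. hcomp Y \<omega> \<alpha> v) = (\<Sum>\<alpha>\<in>S. hcomp Y \<omega> \<alpha> v)"
    by (rule sum.mono_neutral_left) (use S ss in \<open>auto simp: supp_def\<close>)
  also have "\<dots> = sum f S" by (rule sum.cong) (simp_all add: h)
  also have "\<dots> = v" using S(3) by simp
  finally show ?thesis using S ss h by (auto intro: finite_subset)
qed

lemma supp_finite: "finite (supp v)" using hcomp_basic by blast
lemma hcomp_V: "hcomp Y \<omega> \<alpha> v \<in> V \<alpha>" using hcomp_basic by blast
lemma hcomp_sum: "v = (\<Sum>\<alpha>\<in>supp v. hcomp Y \<omega> \<alpha> v)" using hcomp_basic by blast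

lemma hcomp_sum': "finite T \<Longrightarrow> supp v \<subseteq> T \<Longrightarrow> v = (\<Sum>\<alpha>\<in>T. hcomp Y \<omega> \<alpha> v)"
  by (subst hcomp_sum, rule sum.mono_neutral_left) (auto simp: supp_def)

lemma hcomp_hom: "a \<in> V \<beta> \<Longrightarrow> hcomp Y \<omega> \<alpha> a = (if \<alpha> = \<beta> then a else 0)"
  using hcomp_eq[of "{\<beta>}" "\<lambda>_. a" \<alpha>] by simp

lemma hcomp_add: "hcomp Y \<omega> \<alpha> (a + b) = hcomp Y \<omega> \<alpha> a + hcomp Y \<omega> \<alpha> b"
proof -
  define T where "T = supp a \<union> supp b"
  have T: "finite T" by (simp add: T_def supp_finite)
  have e1: "(\<Sum>\<beta>\<in>T. hcomp Y \<omega> \<beta> a) = a" using hcomp_sum'[OF T, of a] by (simp add: T_def)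
  have e2: "(\<Sum>\<beta>\<in>T. hcomp Y \<omega> \<beta> b) = b" using hcomp_sum'[OF T, of b] by (simp add: T_def)
  have "a + b = (\<Sum>\<beta>\<in>T. hcomp Y \<omega> \<beta> a + hcomp Y \<omega> \<beta> b)"
    by (simp add: sum.distrib e1 e2)
  then have "hcomp Y \<omega> \<alpha> (a + b) = (if \<alpha> \<in> T then hcomp Y \<omega> \<alpha> a + hcomp Y \<omega> \<alpha> b else 0)"
    using hcomp_eq[OF T, of "\<lambda>\<beta>. hcomp Y \<omega> \<beta> a + hcomp Y \<omega> \<beta> b"] by (simp add: V_add hcomp_V)
  then show ?thesis by (auto simp: T_def supp_def)
qed

lemma hcomp_scale: "hcomp Y \<omega> \<alpha> (c *\<^sub>C a) = c *\<^sub>C hcomp Y \<omega> \<alpha> a"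
proof -
  define T where "T = supp a"
  have T: "finite T" by (simp add: T_def supp_finite)
  have e: "(\<Sum>\<beta>\<in>T. hcomp Y \<omega> \<beta> a) = a" using hcomp_sum'[OF T, of a] by (simp add: T_def)
  have "c *\<^sub>C a = (\<Sum>\<beta>\<in>T. c *\<^sub>C hcomp Y \<omega> \<beta> a)"
    by (simp add: scaleC_sum_right[symmetric] e)
  then have "hcomp Y \<omega> \<alpha> (c *\<^sub>C a) = (if \<alpha> \<in> T then c *\<^sub>C hcomp Y \<omega> \<alpha> a else 0)"
    using hcomp_eq[OF T, of "\<lambda>\<beta>. c *\<^sub>C hcomp Y \<omega> \<beta> a"] by (simp add: V_scale hcomp_V)
  then show ?thesis by (auto simp: T_def supp_def)
qed

lemma hom_induct:
  assumes "P 0" "\<And>a b. P a \<Longrightarrow> P b \<Longrightarrow> P (a + b)" "\<And>\<alpha> a. a \<in> V \<alpha> \<Longrightarrow> P a"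
  shows "P v"
proof -
  have "\<And>T. finite T \<Longrightarrow> P (\<Sum>\<alpha>\<in>T. hcomp Y \<omega> \<alpha> v)"
  proof -
    fix T :: "rat set" assume "finite T"
    then show "P (\<Sum>\<alpha>\<in>T. hcomp Y \<omega> \<alpha> v)"
      by (induct T rule: finite_induct) (auto intro: assms hcomp_V)
  qed
  then show ?thesis using hcomp_sum supp_finite by metis
qed

definition hext :: "(rat \<Rightarrow> 'v \<Rightarrow> 'x::comm_monoid_add) \<Rightarrow> 'v \<Rightarrow> 'x" where
  "hext F v = (\<Sum>\<alpha>\<in>supp v. F \<alpha> (hcomp Y \<omega> \<alpha> v))"

lemma hext_superset:
  assumes "finite T" "supp v \<subseteq> T" "\<And>\<alpha>. F \<alpha> 0 = 0"
  shows "hext F v = (\<Sum>\<alpha>\<in>T. F \<alpha> (hcomp Y \<omega> \<alpha> v))"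
  unfolding hext_def by (rule sum.mono_neutral_left) (use assms in \<open>auto simp: supp_def\<close>)

lemma hext_add:
  assumes "\<And>\<alpha>. F \<alpha> 0 = 0" "\<And>\<alpha> x y. F \<alpha> (x + y) = F \<alpha> x + F \<alpha> y"
  shows "hext F (a + b) = hext F a + hext F b"
proof -
  define T where "T = supp a \<union> supp b \<union> supp (a + b)"
  have T: "finite T" by (simp add: T_def supp_finite)
  have 1: "hext F a = (\<Sum>\<alpha>\<in>T. F \<alpha> (hcomp Y \<omega> \<alpha> a))" by (rule hext_superset[OF T]) (auto simp: T_def assms)
  have 2: "hext F b = (\<Sum>\<alpha>\<in>T. F \<alpha> (hcomp Y \<omega> \<alpha> b))" by (rule hext_superset[OF T]) (auto simp: T_def assms)
  have 3: "hext F (a + b) = (\<Sum>\<alpha>\<in>T. F \<alpha> (hcomp Y \<omega> \<alpha> (a + b)))" by (rule hext_superset[OF T]) (auto simp: T_def assms)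
  show ?thesis unfolding 1 2 3 by (simp add: hcomp_add assms sum.distrib)
qed

lemma hext_scale:
  assumes "\<And>\<alpha>. F \<alpha> 0 = 0" "\<And>\<alpha> x. F \<alpha> (c *\<^sub>C x) = c *\<^sub>C (F \<alpha> x :: 'x::cvector)"
  shows "hext F (c *\<^sub>C a) = c *\<^sub>C hext F a"
proof -
  define T where "T = supp a \<union> supp (c *\<^sub>C a)"
  have T: "finite T" by (simp add: T_def supp_finite)
  have 1: "hext F a = (\<Sum>\<alpha>\<in>T. F \<alpha> (hcomp Y \<omega> \<alpha> a))" by (rule hext_superset[OF T]) (auto simp: T_def assms)
  have 3: "hext F (c *\<^sub>C a) = (\<Sum>\<alpha>\<in>T. F \<alpha> (hcomp Y \<omega> \<alpha> (c *\<^sub>C a)))" by (rule hext_superset[OF T]) (auto simp: T_def assms)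
  show ?thesis unfolding 1 3 by (simp add: hcomp_scale assms scaleC_sum_right)
qed

lemma hext_hom:
  assumes "a \<in> V \<beta>" "\<And>\<alpha>. F \<alpha> 0 = 0"
  shows "hext F a = F \<beta> a"
proof -
  have "hext F a = (\<Sum>\<alpha>\<in>{\<beta>}. F \<alpha> (hcomp Y \<omega> \<alpha> a))"
    by (rule hext_superset) (auto simp: supp_def hcomp_hom[OF assms(1)] assms(2) split: if_splits)
  then show ?thesis using assms by (simp add: hcomp_hom)
qed

end

lemma cspan_0: "0 \<in> cspan G"
  unfolding cspan_def by (rule CollectI, rule exI[of _ "{}"]) simp

lemma cspan_gen: "g \<in> G \<Longrightarrow> g \<in> cspan G"
  unfolding cspan_def by (rule CollectI, rule exI[of _ "{g}"], rule exI[of _ "\<lambda>_. 1"]) simp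

lemma cspan_add:
  assumes "x \<in> cspan G" "y \<in> cspan G" shows "x + y \<in> cspan G"
proof -
  obtain T c where T: "finite T" "T \<subseteq> G" "x = (\<Sum>s\<in>T. c s *\<^sub>C s)" using assms(1) unfolding cspan_def by blast
  obtain T' c' where T': "finite T'" "T' \<subseteq> G" "y = (\<Sum>s\<in>T'. c' s *\<^sub>C s)" using assms(2) unfolding cspan_def by blast
  define d where "d s = (if s \<in> T then c s else 0) + (if s \<in> T' then c' s else 0)" for s
  have fU: "finite (T \<union> T')" using T T' by simp
  have e1: "(\<Sum>s\<in>T \<union> T'. (if s \<in> T then c s *\<^sub>C s else 0)) = (\<Sum>s\<in>T. c s *\<^sub>C s)"
    by (rule sum_if_extend[OF fU]) simp
  have e2: "(\<Sum>s\<in>T \<union> T'. (if s \<in> T' then c' s *\<^sub>C s else 0)) = (\<Sum>s\<in>T'. c' s *\<^sub>C s)"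
    by (rule sum_if_extend[OF fU]) simp
  have e3: "d s *\<^sub>C s = (if s \<in> T then c s *\<^sub>C s else 0) + (if s \<in> T' then c' s *\<^sub>C s else 0)" for s
    unfolding d_def scaleC_add_left by simp
  have ee: "(\<Sum>s\<in>T \<union> T'. d s *\<^sub>C s) = x + y"
    unfolding e3 sum.distrib e1 e2 T(3) T'(3) ..
  show ?thesis unfolding cspan_def
    by (rule CollectI, rule exI[of _ "T \<union> T'"], rule exI[of _ d]) (use T T' fU ee in auto)
qed

lemma cspan_scale:
  assumes "x \<in> cspan G" shows "a *\<^sub>C x \<in> cspan G"
proof -
  obtain T c where T: "finite T" "T \<subseteq> G" "x = (\<Sum>s\<in>T. c s *\<^sub>C s)" using assms(1) unfolding cspan_def by blast
  have ee: "a *\<^sub>C x = (\<Sum>s\<in>T. (a * c s) *\<^sub>C s)" using T by (simp add: scaleC_sum_right)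
  show ?thesis unfolding cspan_def
    by (rule CollectI, rule exI[of _ T], rule exI[of _ "\<lambda>s. a * c s"]) (use T ee in auto)
qed

lemma cspan_neg: "x \<in> cspan G \<Longrightarrow> - x \<in> cspan G"
  using cspan_scale[of x G "-1"] by (simp add: scaleC_minus_left)

lemma cspan_diff: "x \<in> cspan G \<Longrightarrow> y \<in> cspan G \<Longrightarrow> x - y \<in> cspan G"
  using cspan_add[of x G "-y"] cspan_neg[of y G] by simp

lemma cspan_sum: "(\<And>i. i \<in> A \<Longrightarrow> f i \<in> cspan G) \<Longrightarrow> sum f A \<in> cspan G"
  by (induct A rule: infinite_finite_induct) (auto intro: cspan_0 cspan_add)

lemma cspan_fsum: "fin f \<Longrightarrow> (\<And>i. f i \<in> cspan G) \<Longrightarrow> fsum f \<in> cspan G"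
  unfolding fsum_def by (rule cspan_sum) auto

lemma cspan_lin:
  assumes "is_clin L" "\<And>g. g \<in> G \<Longrightarrow> L g \<in> cspan H" "x \<in> cspan G"
  shows "L x \<in> cspan H"
proof -
  obtain T c where T: "finite T" "T \<subseteq> G" "x = (\<Sum>s\<in>T. c s *\<^sub>C s)" using assms(3) unfolding cspan_def by blast
  have "L x = (\<Sum>s\<in>T. c s *\<^sub>C L s)" using T by (simp add: is_clin_sum[OF assms(1)] is_clinD[OF assms(1)])
  also have "\<dots> \<in> cspan H" using T assms(2) by (auto intro!: cspan_sum cspan_scale)
  finally show ?thesis .
qed

lemma cspan_lin0:
  assumes "is_clin L" "\<And>g. g \<in> G \<Longrightarrow> L g = 0" "x \<in> cspan G"
  shows "L x = 0"
proof -
  obtain T c where T: "finite T" "T \<subseteq> G" "x = (\<Sum>s\<in>T. c s *\<^sub>C s)" using assms(3) unfolding cspan_def by blast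
  show ?thesis using T assms(2) by (auto simp: is_clin_sum[OF assms(1)] is_clinD[OF assms(1)] intro!: sum.neutral)
qed

lemma fsum_split0: "fin f \<Longrightarrow> fsum f = f 0 + fsum (\<lambda>u. f (Suc u))"
proof -
  assume "fin f"
  then obtain N where N: "\<forall>i\<ge>N. f i = 0" unfolding fin_def by blast
  have "fsum f = sum f {..<Suc N}" by (rule fsum_box) (simp add: N)
  moreover have "fsum (\<lambda>u. f (Suc u)) = sum (\<lambda>u. f (Suc u)) {..<N}" by (rule fsum_box) (simp add: N)
  ultimately show ?thesis by (simp only: sum.lessThan_Suc_shift)
qed

lemma fin_shift1: "fin f \<Longrightarrow> fin (\<lambda>u. f (Suc u))"
proof -
  assume "fin f"
  then obtain N where N: "\<forall>i\<ge>N. f i = 0" unfolding fin_def by blast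
  show ?thesis by (rule finI[of N]) (simp add: N)
qed

lemma OV_0: "0 \<in> OV Y \<omega>" unfolding OV_def by (rule cspan_0)
lemma OV_add: "x \<in> OV Y \<omega> \<Longrightarrow> y \<in> OV Y \<omega> \<Longrightarrow> x + y \<in> OV Y \<omega>" unfolding OV_def by (rule cspan_add)
lemma OV_diff: "x \<in> OV Y \<omega> \<Longrightarrow> y \<in> OV Y \<omega> \<Longrightarrow> x - y \<in> OV Y \<omega>" unfolding OV_def by (rule cspan_diff)
lemma OV_neg: "x \<in> OV Y \<omega> \<Longrightarrow> - x \<in> OV Y \<omega>" unfolding OV_def by (rule cspan_neg)
lemma OV_scale: "x \<in> OV Y \<omega> \<Longrightarrow> c *\<^sub>C x \<in> OV Y \<omega>" unfolding OV_def by (rule cspan_scale)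
lemma OV_sum: "(\<And>i. i \<in> A \<Longrightarrow> f i \<in> OV Y \<omega>) \<Longrightarrow> sum f A \<in> OV Y \<omega>" unfolding OV_def by (rule cspan_sum)
lemma OV_fsum: "fin f \<Longrightarrow> (\<And>i. f i \<in> OV Y \<omega>) \<Longrightarrow> fsum f \<in> OV Y \<omega>" unfolding OV_def by (rule cspan_fsum)

definition ep :: "rat \<Rightarrow> int" where "ep \<alpha> = (if \<alpha> \<in> \<int> then 1 else 0)"

lemma bn_m1: "(-1)^i * bn (-1) i = 1"
proof -
  have "bn (-1) i = (-1)^i * ((1 + of_nat i - 1) gchoose i)"
    using gbinomial_minus[of "1::complex" i] by simp
  also have "(1 + of_nat i - 1 :: complex) gchoose i = 1"
    using binomial_gbinomial[of i i, where 'a=complex] by simp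
  finally have "bn (-1) i = (-1)^i" by simp
  then show ?thesis by (simp flip: power_mult_distrib)
qed

lemma sg_m1: "sg (-1) = -1" by (simp add: sg_def)

lemma Ints_floor: "\<alpha> \<in> \<int> \<Longrightarrow> of_int \<lfloor>\<alpha>\<rfloor> = (\<alpha>::rat)"
  by (elim Ints_cases) simp

context qv
begin

abbreviation OVV where "OVV \<equiv> OV Y \<omega>"

lemma Oh_Rz: "Oh Y \<alpha> a b = Rz Y \<lfloor>\<alpha>\<rfloor> (-1 - ep \<alpha>) a b"
  unfolding Oh_def Rz_def ep_def by (rule fsum_cong) (simp add: algebra_simps)

lemma starh_Rz: "starh Y \<alpha> a b = (if \<alpha> \<in> \<int> then Rz Y \<lfloor>\<alpha>\<rfloor> (-1) a b else 0)"
  unfolding starh_def Rz_def by (auto intro!: fsum_cong simp: algebra_simps)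

lemma OV_gen: "a \<in> V \<alpha> \<Longrightarrow> Rz Y \<lfloor>\<alpha>\<rfloor> (-1 - ep \<alpha>) a b \<in> OVV"
  unfolding OV_def Oh_Rz[symmetric] by (rule cspan_gen) blast

lemma fin_gen: "fin (\<lambda>j. c j *\<^sub>C Y a d (q + int j))"
proof -
  obtain N where N: "\<forall>n\<ge>N. Y a d n = 0" using trM' by blast
  show ?thesis by (rule finI[of "nat (N - q)"]) (simp add: N)
qed

lemma stepA:
  "of_int p *\<^sub>C Rz Y \<kappa> (p - 1) a d = - Rz Y (\<kappa> + 1) p (Y \<omega> a 0) d - of_int (\<kappa> + 1 + p) *\<^sub>C Rz Y \<kappa> p a d"
proof -
  define A where "A j = Y a d (p - 1 + int j)" for j
  define c3 where "c3 j = (if j = 0 then 0 else bn \<kappa> (j - 1))" for j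
  have X2: "Rz Y (\<kappa> + 1) p (Y \<omega> a 0) d = fsum (\<lambda>j. (- (bn (\<kappa> + 1) j * of_int (p + int j))) *\<^sub>C A j)"
    unfolding Rz_def A_def by (rule fsum_cong) (simp add: deriv scaleC_minus_right scaleC_minus_left algebra_simps del: of_int_add)
  have X3: "Rz Y \<kappa> p a d = fsum (\<lambda>j. c3 j *\<^sub>C A j)"
  proof -
    have "fsum (\<lambda>j. c3 j *\<^sub>C A j) = fsum (\<lambda>u. c3 (1 + u) *\<^sub>C A (1 + u))"
      by (rule fsum_shift) (auto simp: c3_def A_def intro!: fin_gen)
    also have "\<dots> = Rz Y \<kappa> p a d" unfolding Rz_def c3_def A_def by (rule fsum_cong) (simp add: algebra_simps)
    finally show ?thesis ..
  qed
  have X1: "Rz Y \<kappa> (p - 1) a d = fsum (\<lambda>j. bn \<kappa> j *\<^sub>C A j)"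
    unfolding Rz_def A_def by simp
  have f1: "fin (\<lambda>j. bn \<kappa> j *\<^sub>C A j)" unfolding A_def by (rule Rz_fin)
  have f2: "fin (\<lambda>j. (- (bn (\<kappa> + 1) j * of_int (p + int j))) *\<^sub>C A j)"
    unfolding A_def by (rule fin_gen)
  have f3: "fin (\<lambda>j. c3 j *\<^sub>C A j)"
    unfolding A_def by (rule fin_gen)
  have coef: "of_int p * bn \<kappa> j = bn (\<kappa> + 1) j * of_int (p + int j) - of_int (\<kappa> + 1 + p) * c3 j" for j
  proof (cases j)
    case 0 then show ?thesis by (simp add: c3_def)
  next
    case (Suc k)
    have e1: "bn (\<kappa> + 1) (Suc k) = bn \<kappa> k + bn \<kappa> (Suc k)"
      using gbinomial_Suc_Suc[of "of_int \<kappa> :: complex" k] by simp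
    have e2: "(of_nat k + 1) * bn \<kappa> (Suc k) = (of_int \<kappa> - of_nat k) * bn \<kappa> k"
      using gbinomial_absorption[of k "of_int \<kappa> :: complex"] gbinomial_absorb_comp[of "of_int \<kappa> :: complex" k]
      by (simp add: add.commute)
    have "bn (\<kappa> + 1) j * of_int (p + int j) - of_int (\<kappa> + 1 + p) * c3 j - of_int p * bn \<kappa> j
        = (of_nat k + 1) * bn \<kappa> (Suc k) - (of_int \<kappa> - of_nat k) * bn \<kappa> k"
      unfolding Suc c3_def e1 by (simp add: algebra_simps)
    then show ?thesis using e2 by simp
  qed
  have "of_int p *\<^sub>C Rz Y \<kappa> (p - 1) a d = fsum (\<lambda>j. (of_int p * bn \<kappa> j) *\<^sub>C A j)"
    unfolding X1 by (subst fsum_scaleC[OF f1]) simp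
  also have "\<dots> = fsum (\<lambda>j. - ((- (bn (\<kappa> + 1) j * of_int (p + int j))) *\<^sub>C A j) - of_int (\<kappa> + 1 + p) *\<^sub>C (c3 j *\<^sub>C A j))"
    by (rule fsum_cong) (simp add: coef scaleC_diff_left scaleC_minus_left)
  also have "\<dots> = - fsum (\<lambda>j. (- (bn (\<kappa> + 1) j * of_int (p + int j))) *\<^sub>C A j) - of_int (\<kappa> + 1 + p) *\<^sub>C fsum (\<lambda>j. c3 j *\<^sub>C A j)"
  proof -
    have g1: "fin (\<lambda>j. - ((- (bn (\<kappa> + 1) j * of_int (p + int j))) *\<^sub>C A j))" using f2 by (rule fin_mono) simp
    have g2: "fin (\<lambda>j. of_int (\<kappa> + 1 + p) *\<^sub>C (c3 j *\<^sub>C A j))" using f3 by (rule fin_mono) simp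
    show ?thesis unfolding fsum_diff[OF g1 g2] fsum_neg[OF f2] fsum_scaleC[OF f3] ..
  qed
  finally show ?thesis unfolding X2 X3 .
qed

lemma Ints_plus1: "(\<alpha>::rat) + 1 \<in> \<int> \<longleftrightarrow> \<alpha> \<in> \<int>"
proof
  assume "\<alpha> + 1 \<in> \<int>"
  then have "(\<alpha> + 1) - 1 \<in> \<int>" by (intro Ints_diff Ints_1)
  then show "\<alpha> \<in> \<int>" by simp
qed (intro Ints_add Ints_1)

lemma ep_plus1: "ep (\<alpha> + 1) = ep \<alpha>"
  unfolding ep_def by (simp add: Ints_plus1)

lemma lemA: "a \<in> V \<alpha> \<Longrightarrow> Rz Y \<lfloor>\<alpha>\<rfloor> (-1 - ep \<alpha> - int n) a d \<in> OVV"
proof (induct n arbitrary: \<alpha> a d)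
  case 0 then show ?case using OV_gen by simp
next
  case (Suc n)
  define p where "p = -1 - ep \<alpha> - int n"
  have p: "p \<noteq> 0" unfolding p_def ep_def by auto
  have La: "Y \<omega> a 0 \<in> V (\<alpha> + 1)" using LV Suc by blast
  have 1: "Rz Y (\<lfloor>\<alpha>\<rfloor> + 1) p (Y \<omega> a 0) d \<in> OVV"
    using Suc(1)[OF La, of d] unfolding p_def ep_plus1 by simp
  have 2: "Rz Y \<lfloor>\<alpha>\<rfloor> p a d \<in> OVV" using Suc unfolding p_def by blast
  have "of_int p *\<^sub>C Rz Y \<lfloor>\<alpha>\<rfloor> (p - 1) a d \<in> OVV"
    unfolding stepA by (intro OV_diff OV_neg OV_scale 1 2)
  then have "inverse (of_int p) *\<^sub>C (of_int p *\<^sub>C Rz Y \<lfloor>\<alpha>\<rfloor> (p - 1) a d) \<in> OVV" by (rule OV_scale)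
  then have "Rz Y \<lfloor>\<alpha>\<rfloor> (p - 1) a d \<in> OVV" using p by simp
  then show ?case unfolding p_def by (simp add: algebra_simps)
qed

lemma lemA':
  assumes "a \<in> V \<alpha>" "r \<le> n"
  shows "Rz Y (\<lfloor>\<alpha>\<rfloor> + int r) (-1 - ep \<alpha> - int n) a d \<in> OVV"
proof -
  have "Rz Y (\<lfloor>\<alpha>\<rfloor> + int r) (-1 - ep \<alpha> - int n) a d = fsum (\<lambda>u. bn (int r) u *\<^sub>C Rz Y \<lfloor>\<alpha>\<rfloor> (-1 - ep \<alpha> - int n + int u) a d)"
    by (rule Rz_mult)
  also have "\<dots> = (\<Sum>u\<le>r. bn (int r) u *\<^sub>C Rz Y \<lfloor>\<alpha>\<rfloor> (-1 - ep \<alpha> - int n + int u) a d)"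
    by (rule fsum_superset) (auto simp: binomial_gbinomial[symmetric])
  also have "\<dots> \<in> OVV"
  proof (rule OV_sum, rule OV_scale)
    fix u assume "u \<in> {..r}"
    then have "-1 - ep \<alpha> - int n + int u = -1 - ep \<alpha> - int (n - u)" using assms by auto
    then show "Rz Y \<lfloor>\<alpha>\<rfloor> (-1 - ep \<alpha> - int n + int u) a d \<in> OVV" using lemA[OF assms(1), of "n - u" d] by (simp only:)
  qed
  finally show ?thesis .
qed

end

lemma Ints_add_iff: "(\<alpha>::rat) \<in> \<int> \<Longrightarrow> (\<alpha> + \<beta> \<in> \<int> \<longleftrightarrow> \<beta> \<in> \<int>)"
proof
  assume "\<alpha> \<in> \<int>" "\<alpha> + \<beta> \<in> \<int>"
  then have "(\<alpha> + \<beta>) - \<alpha> \<in> \<int>" by (intro Ints_diff)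
  then show "\<beta> \<in> \<int>" by simp
qed (rule Ints_add)

lemma floor_int_add: "(\<alpha>::rat) \<in> \<int> \<Longrightarrow> \<lfloor>\<alpha> + x\<rfloor> = \<lfloor>\<alpha>\<rfloor> + \<lfloor>x\<rfloor>"
  by (elim Ints_cases) (simp add: add.commute floor_add_int)

lemma ep_int_add: "(\<alpha>::rat) \<in> \<int> \<Longrightarrow> ep (\<alpha> + x) = ep x"
  unfolding ep_def using Ints_add_iff by simp

lemma floor_diff_nat: "\<lfloor>x - (of_nat i::rat)\<rfloor> = \<lfloor>x\<rfloor> - int i"
  using floor_diff_of_int[of x "int i"] by simp

lemma ep_diff_nat: "ep (x - (of_nat i::rat)) = ep x"
proof -
  have "- (of_nat i::rat) \<in> \<int>" by (intro Ints_minus Ints_of_nat)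
  then show ?thesis using ep_int_add[of "- of_nat i" x] by (simp add: algebra_simps)
qed

lemma ep_of_int: "ep (of_int k) = 1" by (simp add: ep_def)

lemma pair_floor:
  assumes "(\<beta>::rat) + \<gamma> \<in> \<int>"
  shows "\<lfloor>\<beta> + \<gamma>\<rfloor> + ep \<beta> - \<lfloor>\<beta>\<rfloor> = \<lfloor>\<gamma>\<rfloor> + 1 \<and> ep \<gamma> = ep \<beta>"
proof (cases "\<beta> \<in> \<int>")
  case True
  then have g: "\<gamma> \<in> \<int>" using assms Ints_add_iff by blast
  show ?thesis using True g by (simp add: floor_int_add ep_def)
next
  case False
  then have g: "\<gamma> \<notin> \<int>" using assms Ints_add_iff[of \<gamma> \<beta>] by (auto simp: add.commute)
  obtain N where N: "\<beta> + \<gamma> = of_int N" using assms by (elim Ints_cases) simp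
  have "\<gamma> = - \<beta> + of_int N" using N by (simp add: algebra_simps)
  then have "\<lfloor>\<gamma>\<rfloor> = \<lfloor>- \<beta>\<rfloor> + N" by (simp only: floor_add_int)
  also have "\<lfloor>- \<beta>\<rfloor> = - \<lfloor>\<beta>\<rfloor> - 1"
    using False by (simp add: floor_minus ceiling_altdef) (metis Ints_of_int)
  finally show ?thesis using N False g by (simp add: ep_def)
qed

context qv
begin

lemma Rz_add1: "Rz Y s q (a + a') b = Rz Y s q a b + Rz Y s q a' b"
  unfolding Rz_def YA_add scaleC_add_right by (rule fsum_add[OF Rz_fin Rz_fin])

lemma Rz_scale1: "Rz Y s q (c *\<^sub>C a) b = c *\<^sub>C Rz Y s q a b"
  unfolding Rz_def YA_scale by (subst fsum_scaleC[OF Rz_fin]) (simp add: mult.commute)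

lemma Rz_lin1: "is_clin (\<lambda>a. Rz Y s q a b)"
  unfolding is_clin_def by (simp add: Rz_add1 Rz_scale1)

lemma starh_0 [simp]: "starh Y \<alpha> 0 b = 0" by (simp add: starh_Rz)

lemma starh_lin1: "is_clin (\<lambda>a. starh Y \<alpha> a b)"
  unfolding is_clin_def by (simp add: starh_Rz Rz_add1 Rz_scale1)

lemma starh_lin2: "is_clin (\<lambda>b. starh Y \<alpha> a b)"
  unfolding is_clin_def by (simp add: starh_Rz is_clinD[OF Rz_lin])

lemma star_hext: "star Y \<omega> a b = hext (\<lambda>\<alpha> x. starh Y \<alpha> x b) a"
  by (simp add: star_def hext_def supp_def)

lemma star_hom: "a \<in> V \<alpha> \<Longrightarrow> star Y \<omega> a b = starh Y \<alpha> a b"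
  unfolding star_hext by (rule hext_hom) simp_all

lemma star_lin1: "is_clin (\<lambda>a. star Y \<omega> a b)"
  unfolding is_clin_def star_hext
  by (simp add: hext_add hext_scale is_clinD[OF starh_lin1])

lemma star_lin2: "is_clin (\<lambda>b. star Y \<omega> a b)"
  unfolding is_clin_def star_hext hext_def
  by (simp add: is_clinD[OF starh_lin2] sum.distrib scaleC_sum_right)

lemma star_0a [simp]: "star Y \<omega> 0 b = 0" using is_clin_0[OF star_lin1] .
lemma star_0b [simp]: "star Y \<omega> a 0 = 0" using is_clin_0[OF star_lin2] .

lemma vanY: "\<exists>N. \<forall>i\<ge>N. Y a b (l + int i) = 0"
proof -
  obtain M where "\<forall>n\<ge>M. Y a b n = 0" using trY' by blast
  then show ?thesis by (intro exI[of _ "nat (M - l)"]) auto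
qed

lemma vanRz: "\<exists>N. \<forall>i\<ge>N. Rz Y s (q + int i) b c = 0"
proof -
  obtain M where "\<forall>q'\<ge>M. \<forall>s. Rz Y s q' b c = 0" using Rz_vanish by blast
  then show ?thesis by (intro exI[of _ "nat (M - q)"]) auto
qed

lemma fin_comp:
  assumes "\<exists>N. \<forall>i\<ge>N. G i = 0" "\<And>i. F i 0 = 0"
  shows "fin (\<lambda>i. F i (G i))"
proof -
  obtain N where "\<forall>i\<ge>N. G i = 0" using assms(1) by blast
  then show ?thesis by (intro finI[of N]) (simp add: assms(2))
qed

lemma star_expand:
  "star Y \<omega> (fsum (\<lambda>i. c i *\<^sub>C Y b d (q + int i))) a = fsum (\<lambda>i. c i *\<^sub>C star Y \<omega> (Y b d (q + int i)) a)"
  by (subst fsum_lin[OF star_lin1 fin_gen]) (simp add: is_clinD[OF star_lin1])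

lemma wt_int: "a \<in> V \<alpha> \<Longrightarrow> b \<in> V \<beta> \<Longrightarrow> Y a b (l + int i) \<in> V (\<alpha> + \<beta> - of_int l - of_int (int i) - 1)"
  using wt[of a \<alpha> b \<beta> "l + int i"] by (simp add: algebra_simps)

lemma LI:
  assumes a: "a \<in> V \<alpha>" and b: "b \<in> V \<beta>"
  shows "star Y \<omega> a (Rz Y \<lfloor>\<beta>\<rfloor> (-1 - ep \<beta>) b c) \<in> OVV"
proof (cases "\<alpha> \<in> \<int>")
  case False then show ?thesis using a by (simp add: star_hom starh_Rz OV_0)
next
  case True
  define k where "k = \<lfloor>\<alpha>\<rfloor>"
  define s where "s = \<lfloor>\<beta>\<rfloor>"
  define q where "q = -1 - ep \<beta>"
  have epa: "ep \<alpha> = 1" using True by (simp add: ep_def)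
  have JB': "fsum (\<lambda>i. bn k i *\<^sub>C Rz Y (s + k - int i) q (Y a b (-1 + int i)) c) =
   fsum (\<lambda>i. ((-1)^i * bn (-1) i) *\<^sub>C Rz Y k (-1 - int i) a (Rz Y s (q + int i) b c)) -
   fsum (\<lambda>i. ((-1)^i * sg (-1) * bn (-1) i) *\<^sub>C Rz Y s (q + -1 - int i) b (Rz Y k (int i) a c))"
    by (rule JB)
  define R1 where "R1 i = Rz Y k (-1 - int i) a (Rz Y s (q + int i) b c)" for i
  have LHS: "fsum (\<lambda>i. bn k i *\<^sub>C Rz Y (s + k - int i) q (Y a b (-1 + int i)) c) \<in> OVV"
  proof (rule OV_fsum)
    show "fin (\<lambda>i. bn k i *\<^sub>C Rz Y (s + k - int i) q (Y a b (-1 + int i)) c)"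
      by (rule fin_comp[OF vanY]) simp
  next
    fix i
    have w: "Y a b (-1 + int i) \<in> V (\<alpha> + (\<beta> - of_int (int i)))"
      using wt_int[OF a b, of "-1" i] by (simp add: algebra_simps)
    have "\<lfloor>\<alpha> + (\<beta> - of_int (int i))\<rfloor> = s + k - int i" "ep (\<alpha> + (\<beta> - of_int (int i))) = ep \<beta>"
      using True by (simp_all add: floor_int_add ep_int_add k_def s_def floor_diff_nat ep_diff_nat)
    then show "bn k i *\<^sub>C Rz Y (s + k - int i) q (Y a b (-1 + int i)) c \<in> OVV"
      using OV_gen[OF w, of c] unfolding q_def by (intro OV_scale) simp
  qed
  have RHS2: "fsum (\<lambda>i. ((-1)^i * sg (-1) * bn (-1) i) *\<^sub>C Rz Y s (q + -1 - int i) b (Rz Y k (int i) a c)) \<in> OVV"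
  proof (rule OV_fsum)
    show "fin (\<lambda>i. ((-1)^i * sg (-1) * bn (-1) i) *\<^sub>C Rz Y s (q + -1 - int i) b (Rz Y k (int i) a c))"
      using fin_comp[OF vanRz[of k 0 a c], of "\<lambda>i x. ((-1)^i * sg (-1) * bn (-1) i) *\<^sub>C Rz Y s (q + -1 - int i) b x"]
      by simp
  next
    fix i
    have eq: "q + -1 - int i = -1 - ep \<beta> - int (Suc i)" by (simp add: q_def)
    have "Rz Y s (q + -1 - int i) b (Rz Y k (int i) a c) \<in> OVV"
      unfolding eq s_def by (rule lemA[OF b])
    then show "((-1)^i * sg (-1) * bn (-1) i) *\<^sub>C Rz Y s (q + -1 - int i) b (Rz Y k (int i) a c) \<in> OVV"
      by (rule OV_scale)
  qed
  have f1: "fin R1"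
    unfolding R1_def using fin_comp[OF vanRz[of s q b c], of "\<lambda>i x. Rz Y k (-1 - int i) a x"] by simp
  have tail: "fsum (\<lambda>u. R1 (Suc u)) \<in> OVV"
  proof (rule OV_fsum[OF fin_shift1[OF f1]])
    fix u
    have eq: "-1 - int (Suc u) = -1 - ep \<alpha> - int u" using epa by simp
    show "R1 (Suc u) \<in> OVV" unfolding R1_def k_def eq by (rule lemA[OF a])
  qed
  have "fsum (\<lambda>i. ((-1)^i * bn (-1) i) *\<^sub>C Rz Y k (-1 - int i) a (Rz Y s (q + int i) b c)) = fsum R1"
    unfolding R1_def bn_m1 by simp
  also have "\<dots> = R1 0 + fsum (\<lambda>u. R1 (Suc u))" by (rule fsum_split0[OF f1])
  finally have "R1 0 = fsum (\<lambda>i. bn k i *\<^sub>C Rz Y (s + k - int i) q (Y a b (-1 + int i)) c)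
      + fsum (\<lambda>i. ((-1)^i * sg (-1) * bn (-1) i) *\<^sub>C Rz Y s (q + -1 - int i) b (Rz Y k (int i) a c))
      - fsum (\<lambda>u. R1 (Suc u))"
    unfolding JB' by (simp add: algebra_simps)
  also have "\<dots> \<in> OVV" by (intro OV_diff OV_add LHS RHS2 tail)
  finally have "R1 0 \<in> OVV" .
  moreover have "star Y \<omega> a (Rz Y \<lfloor>\<beta>\<rfloor> (-1 - ep \<beta>) b c) = R1 0"
    using True a by (simp add: star_hom starh_Rz R1_def k_def s_def q_def)
  ultimately show ?thesis by simp
qed

lemma int_part: "of_int e - (of_nat i :: rat) \<in> \<int>"
  by (intro Ints_diff Ints_of_int Ints_of_nat)

lemma RI:
  assumes b: "b \<in> V \<beta>" and c: "c \<in> V \<gamma>"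
  shows "star Y \<omega> (Rz Y \<lfloor>\<beta>\<rfloor> (-1 - ep \<beta>) b c) a \<in> OVV"
proof -
  define s where "s = \<lfloor>\<beta>\<rfloor>"
  define q where "q = -1 - ep \<beta>"
  have exp: "star Y \<omega> (Rz Y s q b c) a = fsum (\<lambda>i. bn s i *\<^sub>C star Y \<omega> (Y b c (q + int i)) a)"
    unfolding Rz_def by (rule star_expand)
  have weq: "\<beta> + \<gamma> - of_int q - of_int (int i) - 1 = (\<beta> + \<gamma>) + (of_int (ep \<beta>) - of_nat i)" for i
    by (simp add: q_def algebra_simps)
  have w: "Y b c (q + int i) \<in> V ((\<beta> + \<gamma>) + (of_int (ep \<beta>) - of_nat i))" for i
    using wt_int[OF b c, of q i] unfolding weq .
  show ?thesis
  proof (cases "\<beta> + \<gamma> \<in> \<int>")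
    case False
    have "star Y \<omega> (Y b c (q + int i)) a = 0" for i
    proof -
      have "(\<beta> + \<gamma>) + (of_int (ep \<beta>) - of_nat i) \<notin> \<int>"
        using False Ints_add_iff[OF int_part, of "ep \<beta>" i "\<beta> + \<gamma>"] by (simp add: add.commute)
      then show ?thesis using w[of i] by (simp add: star_hom starh_Rz)
    qed
    then show ?thesis unfolding s_def[symmetric] q_def[symmetric] exp by (simp add: OV_0)
  next
    case True
    define W where "W = \<lfloor>\<beta> + \<gamma>\<rfloor> + ep \<beta>"
    have pf: "W - s = \<lfloor>\<gamma>\<rfloor> + int 1" "ep \<gamma> = ep \<beta>"
      using pair_floor[OF True] by (simp_all add: W_def s_def)
    have st: "star Y \<omega> (Y b c (q + int i)) a = Rz Y (W - s + s - int i) (-1) (Y b c (q + int i)) a" for i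
    proof -
      have "(\<beta> + \<gamma>) + (of_int (ep \<beta>) - of_nat i) \<in> \<int>" by (rule Ints_add[OF True int_part])
      moreover have "\<lfloor>(\<beta> + \<gamma>) + (of_int (ep \<beta>) - of_nat i)\<rfloor> = W - s + s - int i"
        using True by (simp add: floor_int_add W_def floor_diff_nat)
      ultimately show ?thesis using w[of i] by (simp add: star_hom starh_Rz)
    qed
    have JB': "fsum (\<lambda>i. bn s i *\<^sub>C Rz Y (W - s + s - int i) (-1) (Y b c (q + int i)) a) =
     fsum (\<lambda>i. ((-1)^i * bn q i) *\<^sub>C Rz Y s (q - int i) b (Rz Y (W - s) (-1 + int i) c a)) -
     fsum (\<lambda>i. ((-1)^i * sg q * bn q i) *\<^sub>C Rz Y (W - s) (-1 + q - int i) c (Rz Y s (int i) b a))"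
      by (rule JB)
    have R1: "fsum (\<lambda>i. ((-1)^i * bn q i) *\<^sub>C Rz Y s (q - int i) b (Rz Y (W - s) (-1 + int i) c a)) \<in> OVV"
    proof (rule OV_fsum)
      show "fin (\<lambda>i. ((-1)^i * bn q i) *\<^sub>C Rz Y s (q - int i) b (Rz Y (W - s) (-1 + int i) c a))"
        using fin_comp[OF vanRz[of "W - s" "-1" c a], of "\<lambda>i x. ((-1)^i * bn q i) *\<^sub>C Rz Y s (q - int i) b x"] by simp
    next
      fix i
      have eq: "q - int i = -1 - ep \<beta> - int i" by (simp add: q_def)
      show "((-1)^i * bn q i) *\<^sub>C Rz Y s (q - int i) b (Rz Y (W - s) (-1 + int i) c a) \<in> OVV"
        unfolding eq s_def by (rule OV_scale, rule lemA[OF b])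
    qed
    have R2: "fsum (\<lambda>i. ((-1)^i * sg q * bn q i) *\<^sub>C Rz Y (W - s) (-1 + q - int i) c (Rz Y s (int i) b a)) \<in> OVV"
    proof (rule OV_fsum)
      show "fin (\<lambda>i. ((-1)^i * sg q * bn q i) *\<^sub>C Rz Y (W - s) (-1 + q - int i) c (Rz Y s (int i) b a))"
        using fin_comp[OF vanRz[of s 0 b a], of "\<lambda>i x. ((-1)^i * sg q * bn q i) *\<^sub>C Rz Y (W - s) (-1 + q - int i) c x"] by simp
    next
      fix i
      have eq: "-1 + q - int i = -1 - ep \<gamma> - int (Suc i)" using pf by (simp add: q_def)
      show "((-1)^i * sg q * bn q i) *\<^sub>C Rz Y (W - s) (-1 + q - int i) c (Rz Y s (int i) b a) \<in> OVV"
        unfolding eq pf(1) by (rule OV_scale, rule lemA'[OF c]) simp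
    qed
    have "star Y \<omega> (Rz Y s q b c) a = fsum (\<lambda>i. bn s i *\<^sub>C Rz Y (W - s + s - int i) (-1) (Y b c (q + int i)) a)"
      unfolding exp st ..
    also have "\<dots> \<in> OVV" unfolding JB' by (intro OV_diff R1 R2)
    finally show ?thesis by (simp add: s_def q_def)
  qed
qed

lemma AS:
  assumes a: "a \<in> V \<alpha>" and b: "b \<in> V \<beta>"
  shows "star Y \<omega> (star Y \<omega> a b) c - star Y \<omega> a (star Y \<omega> b c) \<in> OVV"
proof (cases "\<alpha> \<in> \<int>")
  case False then show ?thesis using a by (simp add: star_hom starh_Rz OV_0)
next
  case True
  define k where "k = \<lfloor>\<alpha>\<rfloor>"
  define s where "s = \<lfloor>\<beta>\<rfloor>"
  have sab: "star Y \<omega> a b = Rz Y k (-1) a b" using True a by (simp add: star_hom starh_Rz k_def)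
  have exp: "star Y \<omega> (star Y \<omega> a b) c = fsum (\<lambda>i. bn k i *\<^sub>C star Y \<omega> (Y a b (-1 + int i)) c)"
    unfolding sab Rz_def by (rule star_expand)
  have w: "Y a b (-1 + int i) \<in> V (\<alpha> + (\<beta> - of_nat i))" for i
    using wt_int[OF a b, of "-1" i] by (simp add: algebra_simps)
  show ?thesis
  proof (cases "\<beta> \<in> \<int>")
    case False
    have "star Y \<omega> (Y a b (-1 + int i)) c = 0" for i
    proof -
      have "\<beta> - of_nat i \<notin> \<int>"
        using False Ints_add_iff[of "- of_nat i" \<beta>] by (simp add: algebra_simps)
      then have "\<alpha> + (\<beta> - of_nat i) \<notin> \<int>" using Ints_add_iff[OF True] by simp
      then show ?thesis using w[of i] by (simp add: star_hom starh_Rz)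
    qed
    moreover have "star Y \<omega> b c = 0" using False b by (simp add: star_hom starh_Rz)
    ultimately show ?thesis unfolding exp by (simp add: OV_0)
  next
    case True2: True
    have st: "star Y \<omega> (Y a b (-1 + int i)) c = Rz Y (s + k - int i) (-1) (Y a b (-1 + int i)) c" for i
    proof -
      have "\<alpha> + (\<beta> - of_nat i) \<in> \<int>" using True True2 by (intro Ints_add Ints_diff Ints_of_nat)
      moreover have "\<lfloor>\<alpha> + (\<beta> - of_nat i)\<rfloor> = s + k - int i"
        using True by (simp add: floor_int_add k_def s_def floor_diff_nat)
      ultimately show ?thesis using w[of i] by (simp add: star_hom starh_Rz)
    qed
    have sbc: "star Y \<omega> b c = Rz Y s (-1) b c" using True2 b by (simp add: star_hom starh_Rz s_def)
    have sa: "star Y \<omega> a x = Rz Y k (-1) a x" for x using True a by (simp add: star_hom starh_Rz k_def)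
    have JB': "fsum (\<lambda>i. bn k i *\<^sub>C Rz Y (s + k - int i) (-1) (Y a b (-1 + int i)) c) =
     fsum (\<lambda>i. ((-1)^i * bn (-1) i) *\<^sub>C Rz Y k (-1 - int i) a (Rz Y s (-1 + int i) b c)) -
     fsum (\<lambda>i. ((-1)^i * sg (-1) * bn (-1) i) *\<^sub>C Rz Y s (-1 + -1 - int i) b (Rz Y k (int i) a c))"
      by (rule JB)
    define R1 where "R1 i = Rz Y k (-1 - int i) a (Rz Y s (-1 + int i) b c)" for i
    have f1: "fin R1"
      unfolding R1_def using fin_comp[OF vanRz[of s "-1" b c], of "\<lambda>i x. Rz Y k (-1 - int i) a x"] by simp
    have epa: "ep \<alpha> = 1" "ep \<beta> = 1" using True True2 by (simp_all add: ep_def)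
    have tail: "fsum (\<lambda>u. R1 (Suc u)) \<in> OVV"
    proof (rule OV_fsum[OF fin_shift1[OF f1]])
      fix u
      have eq: "-1 - int (Suc u) = -1 - ep \<alpha> - int u" using epa by simp
      show "R1 (Suc u) \<in> OVV" unfolding R1_def k_def eq by (rule lemA[OF a])
    qed
    have R2: "fsum (\<lambda>i. ((-1)^i * sg (-1) * bn (-1) i) *\<^sub>C Rz Y s (-1 + -1 - int i) b (Rz Y k (int i) a c)) \<in> OVV"
    proof (rule OV_fsum)
      show "fin (\<lambda>i. ((-1)^i * sg (-1) * bn (-1) i) *\<^sub>C Rz Y s (-1 + -1 - int i) b (Rz Y k (int i) a c))"
        using fin_comp[OF vanRz[of k 0 a c], of "\<lambda>i x. ((-1)^i * sg (-1) * bn (-1) i) *\<^sub>C Rz Y s (-1 + -1 - int i) b x"]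
        by simp
    next
      fix i
      have eq: "-1 + -1 - int i = -1 - ep \<beta> - int i" using epa by simp
      show "((-1)^i * sg (-1) * bn (-1) i) *\<^sub>C Rz Y s (-1 + -1 - int i) b (Rz Y k (int i) a c) \<in> OVV"
        unfolding eq s_def by (rule OV_scale, rule lemA[OF b])
    qed
    have "fsum (\<lambda>i. ((-1)^i * bn (-1) i) *\<^sub>C Rz Y k (-1 - int i) a (Rz Y s (-1 + int i) b c)) = fsum R1"
      unfolding R1_def bn_m1 by simp
    also have "\<dots> = R1 0 + fsum (\<lambda>u. R1 (Suc u))" by (rule fsum_split0[OF f1])
    finally have r1: "fsum (\<lambda>i. ((-1)^i * bn (-1) i) *\<^sub>C Rz Y k (-1 - int i) a (Rz Y s (-1 + int i) b c)) = R1 0 + fsum (\<lambda>u. R1 (Suc u))" .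
    have e: "star Y \<omega> (star Y \<omega> a b) c = R1 0 + fsum (\<lambda>u. R1 (Suc u))
        - fsum (\<lambda>i. ((-1)^i * sg (-1) * bn (-1) i) *\<^sub>C Rz Y s (-1 + -1 - int i) b (Rz Y k (int i) a c))"
      unfolding exp st JB' r1 ..
    have "R1 0 = star Y \<omega> a (star Y \<omega> b c)" unfolding R1_def sbc sa by simp
    then have "star Y \<omega> (star Y \<omega> a b) c - star Y \<omega> a (star Y \<omega> b c) = fsum (\<lambda>u. R1 (Suc u))
        - fsum (\<lambda>i. ((-1)^i * sg (-1) * bn (-1) i) *\<^sub>C Rz Y s (-1 + -1 - int i) b (Rz Y k (int i) a c))"
      unfolding e by simp
    also have "\<dots> \<in> OVV" by (intro OV_diff tail R2)
    finally show ?thesis .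
  qed
qed

lemma Rz_vac: "Rz Y s (-1) a vac = a"
  unfolding Rz_def by (subst fsum_single[where k=0]) (auto simp: creat0 creat1)

lemma nonint_OV: "a \<in> V \<alpha> \<Longrightarrow> \<alpha> \<notin> \<int> \<Longrightarrow> a \<in> OVV"
  using OV_gen[of a \<alpha> vac] by (simp add: ep_def Rz_vac)

lemma LI_gen: "u \<in> OVV \<Longrightarrow> star Y \<omega> x u \<in> OVV"
  unfolding OV_def
proof (rule cspan_lin[OF star_lin2])
  fix g assume "g \<in> {Oh Y \<alpha> a b |\<alpha> a b. a \<in> V \<alpha>}"
  then obtain \<beta> b c where g: "g = Rz Y \<lfloor>\<beta>\<rfloor> (-1 - ep \<beta>) b c" "b \<in> V \<beta>" by (auto simp: Oh_Rz)
  show "star Y \<omega> x g \<in> cspan {Oh Y \<alpha> a b |\<alpha> a b. a \<in> V \<alpha>}"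
    unfolding OV_def[symmetric] g(1)
    by (rule hom_induct[of "\<lambda>x. star Y \<omega> x (Rz Y \<lfloor>\<beta>\<rfloor> (-1 - ep \<beta>) b c) \<in> OVV" x])
       (auto simp: OV_0 is_clinD[OF star_lin1] intro: OV_add LI[OF _ g(2)])
qed

lemma RI_gen: "u \<in> OVV \<Longrightarrow> star Y \<omega> u x \<in> OVV"
  unfolding OV_def
proof (rule cspan_lin[OF star_lin1])
  fix g assume "g \<in> {Oh Y \<alpha> a b |\<alpha> a b. a \<in> V \<alpha>}"
  then obtain \<beta> b c where g: "g = Rz Y \<lfloor>\<beta>\<rfloor> (-1 - ep \<beta>) b c" "b \<in> V \<beta>" by (auto simp: Oh_Rz)
  show "star Y \<omega> g x \<in> cspan {Oh Y \<alpha> a b |\<alpha> a b. a \<in> V \<alpha>}"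
    unfolding OV_def[symmetric] g(1)
    by (rule hom_induct[of "\<lambda>c. star Y \<omega> (Rz Y \<lfloor>\<beta>\<rfloor> (-1 - ep \<beta>) b c) x \<in> OVV" c])
       (auto simp: OV_0 is_clinD[OF star_lin1] is_clinD[OF Rz_lin] intro: OV_add RI[OF g(2)])
qed

lemma AS_gen: "star Y \<omega> (star Y \<omega> a b) c - star Y \<omega> a (star Y \<omega> b c) \<in> OVV"
proof (induct a rule: hom_induct)
  case 1 then show ?case by (simp add: OV_0)
next
  case (2 a a')
  then show ?case
    by (simp add: is_clinD[OF star_lin1] is_clinD[OF star_lin2])
       (metis (no_types, lifting) OV_add add_diff_add)
next
  case (3 \<alpha> a)
  show ?case
  proof (induct b rule: hom_induct)
    case 1 then show ?case by (simp add: OV_0)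
  next
    case (2 b b')
    then show ?case
      by (simp add: is_clinD[OF star_lin1] is_clinD[OF star_lin2])
         (metis (no_types, lifting) OV_add add_diff_add)
  next
    case (3 \<beta> b)
    then show ?case using AS[OF \<open>a \<in> V \<alpha>\<close>] by blast
  qed
qed

lemma ID1: "star Y \<omega> vac a = a"
proof -
  have "star Y \<omega> vac a = Rz Y 0 (-1) vac a" using star_hom[OF vac_V] by (simp add: starh_Rz)
  also have "\<dots> = a" unfolding Rz_def by (subst fsum_single[where k=0]) (auto simp: vacY)
  finally show ?thesis .
qed

lemma ID2: "star Y \<omega> a vac - a \<in> OVV"
proof (induct a rule: hom_induct)
  case 1 then show ?case by (simp add: OV_0)
next
  case (2 a a')
  then show ?case
    by (simp add: is_clinD[OF star_lin1]) (metis (no_types, lifting) OV_add add_diff_add)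
next
  case (3 \<alpha> a)
  show ?case
  proof (cases "\<alpha> \<in> \<int>")
    case True then show ?thesis using 3 by (simp add: star_hom starh_Rz Rz_vac OV_0)
  next
    case False then show ?thesis using 3 by (simp add: star_hom starh_Rz OV_neg nonint_OV)
  qed
qed

lemma bn_nat: "bn (int r) u = of_nat (r choose u)"
  using binomial_gbinomial[of r u, where 'a=complex] by simp

lemma star_omega: "star Y \<omega> \<omega> a = Y \<omega> a (-1) + 2 *\<^sub>C Y \<omega> a 0 + Y \<omega> a 1"
proof -
  have "(2::rat) \<in> \<int>" by simp
  then have "star Y \<omega> \<omega> a = Rz Y 2 (-1) \<omega> a" using star_hom[OF omega_V] by (simp add: starh_Rz)
  also have "\<dots> = (\<Sum>j\<in>{0,1,2}. bn 2 j *\<^sub>C Y \<omega> a (-1 + int j))"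
    unfolding Rz_def using bn_nat[of 2]
    by (intro fsum_superset) (auto simp: binomial_eq_0)
  also have "\<dots> = Y \<omega> a (-1) + 2 *\<^sub>C Y \<omega> a 0 + Y \<omega> a 1"
    using bn_nat[of 2 1] bn_nat[of 2 2] bn_nat[of 2 0] by (simp add: algebra_simps)
  finally show ?thesis .
qed

lemma OC:
  assumes a: "a \<in> V \<alpha>"
  shows "star Y \<omega> \<omega> a - star Y \<omega> a \<omega> \<in> OVV"
proof (cases "\<alpha> \<in> \<int>")
  case False
  then show ?thesis using a nonint_OV LI_gen by (simp add: star_hom starh_Rz)
next
  case True
  define k where "k = \<lfloor>\<alpha>\<rfloor>"
  have ak0: "\<alpha> = of_int k" unfolding k_def using Ints_floor[OF True] by (rule sym)
  have ak: "of_rat \<alpha> = (of_int k :: complex)" by (subst ak0) simp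
  have epa: "ep \<alpha> = 1" using True by (simp add: ep_def)
  define La where "La = Y \<omega> a 0"
  have La: "La \<in> V (\<alpha> + 1)" unfolding La_def by (rule LV[OF a])
  have sa: "star Y \<omega> a x = Rz Y k (-1) a x" for x using True a by (simp add: star_hom starh_Rz k_def)
  define T where "T i = bn (-1) i *\<^sub>C Rz Y k (-1 + -1 - int i) (Y \<omega> a (int i)) vac" for i
  have JC': "fsum T = Y \<omega> (Rz Y k (-1) a vac) (-1) - Rz Y k (-1) a (Y \<omega> vac (-1))"
    unfolding T_def by (rule JC)
  then have e1: "Y \<omega> a (-1) - star Y \<omega> a \<omega> = fsum T" by (simp add: Rz_vac creat1 sa)
  have fT: "fin T"
  proof -
    obtain N where N: "\<forall>i\<ge>N. Y \<omega> a (0 + int i) = 0" using vanY by blast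
    show ?thesis by (rule finI[of N]) (use N in \<open>simp add: T_def\<close>)
  qed
  have fT2: "fin (\<lambda>u. T (Suc u))" by (rule fin_shift1[OF fT])
  have split: "fsum T = T 0 + T 1 + fsum (\<lambda>u. T (Suc (Suc u)))"
    using fsum_split0[OF fT] fsum_split0[OF fT2] by simp
  have O1: "Rz Y (k + 1) (-2) La vac \<in> OVV"
  proof -
    have "\<lfloor>\<alpha> + 1\<rfloor> = k + 1" "ep (\<alpha> + 1) = 1" using epa by (simp_all add: k_def ep_plus1)
    then show ?thesis using OV_gen[OF La, of vac] by simp
  qed
  have T0: "T 0 = Rz Y (k + 1) (-2) La vac - La"
  proof -
    have "Rz Y (k + 1) (-2) La vac = fsum (\<lambda>u. bn 1 u *\<^sub>C Rz Y k (-2 + int u) La vac)" by (rule Rz_mult)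
    also have "\<dots> = (\<Sum>u\<in>{0,1}. bn 1 u *\<^sub>C Rz Y k (-2 + int u) La vac)"
      by (rule fsum_superset) (auto simp: gchoose_one)
    also have "\<dots> = Rz Y k (-2) La vac + La" by (simp add: gchoose_one Rz_vac)
    finally show ?thesis by (simp add: T_def La_def)
  qed
  have O2: "T 1 \<in> OVV"
  proof -
    have eq: "-1 + -1 - int 1 = -1 - ep \<alpha> - int 1" using epa by simp
    have "Rz Y k (-1 + -1 - int 1) a vac \<in> OVV" unfolding eq k_def by (rule lemA[OF a])
    then show ?thesis unfolding T_def using a by (simp add: V_iff Rz_scale1 OV_scale)
  qed
  have O3: "fsum (\<lambda>u. T (Suc (Suc u))) \<in> OVV"
  proof (rule OV_fsum)
    show "fin (\<lambda>u. T (Suc (Suc u)))" by (rule fin_shift1[OF fT2])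
  next
    fix u
    have w: "Y \<omega> a (int (Suc (Suc u))) \<in> V (\<alpha> - 1 - of_nat u)"
      using wt[OF omega_V a, of "int (Suc (Suc u))"] by (simp add: algebra_simps)
    have "\<lfloor>\<alpha> - 1 - of_nat u\<rfloor> = k - 1 - int u" "ep (\<alpha> - 1 - of_nat u) = 1"
    proof -
      show "\<lfloor>\<alpha> - 1 - of_nat u\<rfloor> = k - 1 - int u" by (simp add: floor_diff_nat k_def)
      show "ep (\<alpha> - 1 - of_nat u) = 1" using True unfolding ep_def by (simp add: Ints_diff)
    qed
    then have "Rz Y (k - 1 - int u + int (Suc u)) (-1 - 1 - int (Suc (Suc u))) (Y \<omega> a (int (Suc (Suc u)))) vac \<in> OVV"
      using lemA'[OF w, of "Suc u" "Suc (Suc u)" vac] by simp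
    then show "T (Suc (Suc u)) \<in> OVV" unfolding T_def by (intro OV_scale) (simp add: algebra_simps)
  qed
  have OLa: "La + of_int k *\<^sub>C a \<in> OVV"
  proof -
    have "Rz Y k (-2) a vac = (\<Sum>j\<in>{0,1}. bn k j *\<^sub>C Y a vac (-2 + int j))"
      unfolding Rz_def by (rule fsum_superset) (auto simp: creat0)
    also have "\<dots> = Y a vac (-2) + of_int k *\<^sub>C a" by (simp add: creat1)
    also have "Y a vac (-2) = La"
      using deriv[of a vac "-1"] creat1[of "Y \<omega> a 0"] by (simp add: La_def scaleC_minus_left)
    finally have "Rz Y k (-2) a vac = La + of_int k *\<^sub>C a" .
    moreover have "Rz Y k (-2) a vac \<in> OVV" using OV_gen[OF a, of vac] epa by (simp add: k_def)
    ultimately show ?thesis by simp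
  qed
  have "star Y \<omega> \<omega> a - star Y \<omega> a \<omega> = (Y \<omega> a (-1) - star Y \<omega> a \<omega>) + 2 *\<^sub>C La + of_int k *\<^sub>C a"
    unfolding star_omega using a ak by (simp add: V_iff La_def algebra_simps)
  also have "\<dots> = Rz Y (k + 1) (-2) La vac + T 1 + fsum (\<lambda>u. T (Suc (Suc u))) + (La + of_int k *\<^sub>C a)"
    unfolding e1 split T0 by (simp add: algebra_simps scaleC_add_left[of 1 1, simplified])
  also have "\<dots> \<in> OVV" by (intro OV_add O1 O2 O3 OLa)
  finally show ?thesis .
qed

lemma OC_gen: "star Y \<omega> \<omega> a - star Y \<omega> a \<omega> \<in> OVV"
proof (induct a rule: hom_induct)
  case 1 then show ?case by (simp add: OV_0)
next
  case (2 a a')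
  then show ?case
    by (simp add: is_clinD[OF star_lin1] is_clinD[OF star_lin2]) (metis (no_types, lifting) OV_add add_diff_add)
next
  case (3 \<alpha> a) then show ?case by (rule OC)
qed

end

lemma floor_gt: "(x::rat) - 1 < of_int \<lfloor>x\<rfloor>"
  using floor_le_iff[of x "\<lfloor>x\<rfloor>"] by simp

locale qvm = qv Y vac \<omega> cc for Y :: "'v::cvector \<Rightarrow> 'v \<Rightarrow> int \<Rightarrow> 'v" and vac \<omega> cc +
  fixes YM :: "'v \<Rightarrow> 'm::cvector \<Rightarrow> int \<Rightarrow> 'm"
  assumes WM: "weak_module Y vac \<omega> YM"
begin

lemma linM1': "is_clin (\<lambda>a. YM a w n)"
proof -
  have "\<forall>w n. is_clin (\<lambda>a. YM a w n)" using WM unfolding weak_module_def by (elim conjE)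
  then show ?thesis by blast
qed
lemma linM': "is_clin (\<lambda>w. YM a w n)" using WM unfolding weak_module_def by blast
lemma trM0: "truncation YM" using WM unfolding weak_module_def by blast
lemma vacM: "YM vac w n = (if n = -1 then w else 0)" using WM unfolding weak_module_def by blast
lemma jacM: "jacobi Y YM" using WM unfolding weak_module_def by blast

sublocale M: bor Y YM
  by unfold_locales (auto simp: qtrY trM0 jacM linM' linM1')

abbreviation Om where "Om \<equiv> Omega Y \<omega> YM"
abbreviation oP where "oP \<equiv> oop Y \<omega> YM"

lemma OmD: "u \<in> Om \<Longrightarrow> a \<in> V \<alpha> \<Longrightarrow> of_int m > \<alpha> - 1 \<Longrightarrow> YM a u m = 0"
  by (auto simp: Omega_def)

lemma Om_0: "0 \<in> Om" by (simp add: Omega_def)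
lemma Om_add: "u \<in> Om \<Longrightarrow> v \<in> Om \<Longrightarrow> u + v \<in> Om" by (simp add: Omega_def M.YM_add)
lemma Om_scale: "u \<in> Om \<Longrightarrow> c *\<^sub>C u \<in> Om" by (simp add: Omega_def M.YM_scale)
lemma Om_sum: "(\<And>i. i \<in> A \<Longrightarrow> f i \<in> Om) \<Longrightarrow> sum f A \<in> Om"
  by (induct A rule: infinite_finite_induct) (auto intro: Om_0 Om_add)

lemma oh_0 [simp]: "oh YM \<alpha> 0 u = 0" by (simp add: oh_def)

lemma oh_lin1: "is_clin (\<lambda>x. oh YM \<alpha> x u)"
  unfolding is_clin_def oh_def by (simp add: is_clinD[OF linM1'])

lemma oh_lin2: "is_clin (\<lambda>u. oh YM \<alpha> x u)"
  unfolding is_clin_def oh_def by (simp add: is_clinD[OF linM'])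

lemma oop_hext: "oP a u = hext (\<lambda>\<alpha> x. oh YM \<alpha> x u) a"
  by (simp add: oop_def hext_def supp_def)

lemma oop_hom: "a \<in> V \<alpha> \<Longrightarrow> oP a u = oh YM \<alpha> a u"
  unfolding oop_hext by (rule hext_hom) simp_all

lemma oop_lin1: "is_clin (\<lambda>a. oP a u)"
  unfolding is_clin_def oop_hext
  by (simp add: hext_add hext_scale is_clinD[OF oh_lin1])

lemma oop_lin2: "is_clin (\<lambda>u. oP a u)"
  unfolding is_clin_def oop_hext hext_def
  by (simp add: is_clinD[OF oh_lin2] sum.distrib scaleC_sum_right)

lemma oop_expand:
  "oP (fsum (\<lambda>i. c i *\<^sub>C Y b d (q + int i))) u = fsum (\<lambda>i. c i *\<^sub>C oP (Y b d (q + int i)) u)"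
  by (subst fsum_lin[OF oop_lin1 fin_gen]) (simp add: is_clinD[OF oop_lin1])

lemma B5: "u \<in> Om \<Longrightarrow> oP a u \<in> Om"
proof -
  assume u: "u \<in> Om"
  have h: "oh YM \<alpha> x u \<in> Om" if x: "x \<in> V \<alpha>" for \<alpha> x
  proof (cases "\<alpha> \<in> \<int>")
    case False then show ?thesis by (simp add: oh_def Om_0)
  next
    case True
    define k where "k = \<lfloor>\<alpha>\<rfloor>"
    have ak: "\<alpha> = of_int k" unfolding k_def using Ints_floor[OF True] by (rule sym)
    show ?thesis unfolding Omega_def
    proof (intro CollectI allI impI, elim conjE)
      fix \<gamma> c m assume c: "c \<in> V \<gamma>" and m: "\<gamma> - 1 < of_int m"
      have cm: "YM c (YM x u (k - 1)) m - YM x (YM c u m) (k - 1) = fsum (\<lambda>i. bn m i *\<^sub>C YM (Y c x (int i)) u (m + (k - 1) - int i))"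
        by (rule M.comm)
      have "YM c u m = 0" using OmD[OF u c m] .
      moreover have "fsum (\<lambda>i. bn m i *\<^sub>C YM (Y c x (int i)) u (m + (k - 1) - int i)) = 0"
      proof (rule fsum_zero_cond)
        fix i
        have w: "Y c x (int i) \<in> V (\<gamma> + \<alpha> - of_int (int i) - 1)" by (rule wt[OF c x])
        have "\<gamma> + \<alpha> - of_int (int i) - 1 - 1 < of_int (m + (k - 1) - int i)" using m ak by simp
        then show "bn m i *\<^sub>C YM (Y c x (int i)) u (m + (k - 1) - int i) = 0" using OmD[OF u w] by simp
      qed
      ultimately show "YM c (oh YM \<alpha> x u) m = 0" using cm True by (simp add: oh_def k_def)
    qed
  qed
  have "oP a u = (\<Sum>\<alpha>\<in>supp a. oh YM \<alpha> (hcomp Y \<omega> \<alpha> a) u)" by (simp add: oop_hext hext_def)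
  also have "\<dots> \<in> Om" by (rule Om_sum, rule h, rule hcomp_V)
  finally show ?thesis .
qed

lemma B8: "oP vac u = u"
  using oop_hom[OF vac_V] by (simp add: oh_def vacM)

lemma jacM': "fsum (\<lambda>i. bn m i *\<^sub>C YM (Y a b (l + int i)) w (m + n - int i)) =
     fsum (\<lambda>i. ((-1) ^ i * bn l i) *\<^sub>C YM a (YM b w (n + int i)) (m + l - int i))
     - fsum (\<lambda>i. ((-1) ^ i * (if even l then 1 else -1) * bn l i) *\<^sub>C YM b (YM a w (m + int i)) (n + l - int i))"
  using jacM unfolding jacobi_def by blast

lemma B6hom:
  assumes b: "b \<in> V \<beta>" and c: "c \<in> V \<gamma>" and u: "u \<in> Om"
  shows "oP (Rz Y \<lfloor>\<beta>\<rfloor> (-1 - ep \<beta>) b c) u = 0"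
proof -
  define s where "s = \<lfloor>\<beta>\<rfloor>"
  define q where "q = -1 - ep \<beta>"
  have exp: "oP (Rz Y s q b c) u = fsum (\<lambda>i. bn s i *\<^sub>C oP (Y b c (q + int i)) u)"
    unfolding Rz_def by (rule oop_expand)
  have weq: "\<beta> + \<gamma> - of_int q - of_int (int i) - 1 = (\<beta> + \<gamma>) + (of_int (ep \<beta>) - of_nat i)" for i
    by (simp add: q_def algebra_simps)
  have w: "Y b c (q + int i) \<in> V ((\<beta> + \<gamma>) + (of_int (ep \<beta>) - of_nat i))" for i
    using wt_int[OF b c, of q i] unfolding weq .
  show ?thesis
  proof (cases "\<beta> + \<gamma> \<in> \<int>")
    case False
    have "oP (Y b c (q + int i)) u = 0" for i
    proof -
      have "(\<beta> + \<gamma>) + (of_int (ep \<beta>) - of_nat i) \<notin> \<int>"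
        using False Ints_add_iff[OF int_part, of "ep \<beta>" i "\<beta> + \<gamma>"] by (simp add: add.commute)
      then show ?thesis using w[of i] by (simp add: oop_hom oh_def)
    qed
    then show ?thesis unfolding s_def[symmetric] q_def[symmetric] exp by simp
  next
    case True
    define W where "W = \<lfloor>\<beta> + \<gamma>\<rfloor> + ep \<beta>"
    have pf: "W - s = \<lfloor>\<gamma>\<rfloor> + 1" "ep \<gamma> = ep \<beta>"
      using pair_floor[OF True] by (simp_all add: W_def s_def)
    have st: "oP (Y b c (q + int i)) u = YM (Y b c (q + int i)) u (s + (W - 1 - s) - int i)" for i
    proof -
      have I: "(\<beta> + \<gamma>) + (of_int (ep \<beta>) - of_nat i) \<in> \<int>" by (rule Ints_add[OF True int_part])
      have fl: "\<lfloor>(\<beta> + \<gamma>) + (of_int (ep \<beta>) - of_nat i)\<rfloor> = W - int i"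
        using True by (simp add: floor_int_add W_def floor_diff_nat)
      have "oP (Y b c (q + int i)) u = oh YM ((\<beta> + \<gamma>) + (of_int (ep \<beta>) - of_nat i)) (Y b c (q + int i)) u"
        by (rule oop_hom[OF w])
      also have "\<dots> = YM (Y b c (q + int i)) u (\<lfloor>(\<beta> + \<gamma>) + (of_int (ep \<beta>) - of_nat i)\<rfloor> - 1)"
        by (simp only: oh_def if_P[OF I])
      finally show ?thesis unfolding fl by (simp add: algebra_simps)
    qed
    have j: "fsum (\<lambda>i. bn s i *\<^sub>C YM (Y b c (q + int i)) u (s + (W - 1 - s) - int i)) =
     fsum (\<lambda>i. ((-1) ^ i * bn q i) *\<^sub>C YM b (YM c u ((W - 1 - s) + int i)) (s + q - int i))
     - fsum (\<lambda>i. ((-1) ^ i * (if even q then 1 else -1) * bn q i) *\<^sub>C YM c (YM b u (s + int i)) ((W - 1 - s) + q - int i))"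
      by (rule jacM')
    have z1: "YM c u ((W - 1 - s) + int i) = 0" for i
    proof (rule OmD[OF u c])
      show "\<gamma> - 1 < of_int (W - 1 - s + int i)" using pf floor_gt[of \<gamma>] by simp
    qed
    have z2: "YM b u (s + int i) = 0" for i
    proof (rule OmD[OF u b])
      show "\<beta> - 1 < of_int (s + int i)" using floor_gt[of \<beta>] by (simp add: s_def)
    qed
    have "oP (Rz Y s q b c) u = 0" unfolding exp st j z1 z2 by simp
    then show ?thesis by (simp add: s_def q_def)
  qed
qed

lemma B6: "a \<in> OVV \<Longrightarrow> u \<in> Om \<Longrightarrow> oP a u = 0"
proof -
  assume a: "a \<in> OVV" and u: "u \<in> Om"
  show ?thesis
  proof (rule cspan_lin0[OF oop_lin1 _ a[unfolded OV_def]])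
    fix g assume "g \<in> {Oh Y \<alpha> a b |\<alpha> a b. a \<in> V \<alpha>}"
    then obtain \<beta> b c where g: "g = Rz Y \<lfloor>\<beta>\<rfloor> (-1 - ep \<beta>) b c" "b \<in> V \<beta>" by (auto simp: Oh_Rz)
    show "oP g u = 0"
      unfolding g(1)
      by (rule hom_induct[of "\<lambda>c. oP (Rz Y \<lfloor>\<beta>\<rfloor> (-1 - ep \<beta>) b c) u = 0" c])
         (auto simp: is_clinD[OF oop_lin1] is_clinD[OF Rz_lin] is_clin_0[OF oop_lin1] intro: B6hom[OF g(2) _ u])
  qed
qed

lemma B7hom:
  assumes a: "a \<in> V \<alpha>" and b: "b \<in> V \<beta>" and u: "u \<in> Om"
  shows "oP (star Y \<omega> a b) u = oP a (oP b u)"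
proof (cases "\<alpha> \<in> \<int>")
  case False then show ?thesis using a by (simp add: star_hom starh_Rz oop_hom oh_def)
next
  case True
  define k where "k = \<lfloor>\<alpha>\<rfloor>"
  define s where "s = \<lfloor>\<beta>\<rfloor>"
  have sab: "star Y \<omega> a b = Rz Y k (-1) a b" using True a by (simp add: star_hom starh_Rz k_def)
  have exp: "oP (star Y \<omega> a b) u = fsum (\<lambda>i. bn k i *\<^sub>C oP (Y a b (-1 + int i)) u)"
    unfolding sab Rz_def by (rule oop_expand)
  have w: "Y a b (-1 + int i) \<in> V (\<alpha> + (\<beta> - of_nat i))" for i
    using wt_int[OF a b, of "-1" i] by (simp add: algebra_simps)
  show ?thesis
  proof (cases "\<beta> \<in> \<int>")
    case False
    have "oP (Y a b (-1 + int i)) u = 0" for i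
    proof -
      have "\<beta> - of_nat i \<notin> \<int>"
        using False Ints_add_iff[of "- of_nat i" \<beta>] by (simp add: algebra_simps)
      then have "\<alpha> + (\<beta> - of_nat i) \<notin> \<int>" using Ints_add_iff[OF True] by simp
      then show ?thesis using w[of i] by (simp add: oop_hom oh_def)
    qed
    moreover have "oP b u = 0" using False b by (simp add: oop_hom oh_def)
    ultimately show ?thesis unfolding exp by (simp add: is_clin_0[OF oop_lin2])
  next
    case True2: True
    have st: "oP (Y a b (-1 + int i)) u = YM (Y a b (-1 + int i)) u (k + (s - 1) - int i)" for i
    proof -
      have I: "\<alpha> + (\<beta> - of_nat i) \<in> \<int>" using True True2 by (intro Ints_add Ints_diff Ints_of_nat)
      have fl: "\<lfloor>\<alpha> + (\<beta> - of_nat i)\<rfloor> = s + k - int i"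
        using True by (simp add: floor_int_add k_def s_def floor_diff_nat)
      have "oP (Y a b (-1 + int i)) u = oh YM (\<alpha> + (\<beta> - of_nat i)) (Y a b (-1 + int i)) u"
        by (rule oop_hom[OF w])
      also have "\<dots> = YM (Y a b (-1 + int i)) u (\<lfloor>\<alpha> + (\<beta> - of_nat i)\<rfloor> - 1)"
        by (simp only: oh_def if_P[OF I])
      finally show ?thesis unfolding fl by (simp add: algebra_simps)
    qed
    have j: "fsum (\<lambda>i. bn k i *\<^sub>C YM (Y a b (-1 + int i)) u (k + (s - 1) - int i)) =
     fsum (\<lambda>i. ((-1) ^ i * bn (-1) i) *\<^sub>C YM a (YM b u ((s - 1) + int i)) (k + -1 - int i))
     - fsum (\<lambda>i. ((-1) ^ i * (if even (-1::int) then 1 else -1) * bn (-1) i) *\<^sub>C YM b (YM a u (k + int i)) ((s - 1) + -1 - int i))"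
      by (rule jacM')
    have bs: "\<beta> = of_int s" unfolding s_def using Ints_floor[OF True2] by (rule sym)
    have ak: "\<alpha> = of_int k" unfolding k_def using Ints_floor[OF True] by (rule sym)
    have z2: "YM a u (k + int i) = 0" for i
      by (rule OmD[OF u a]) (simp add: ak)
    have z1: "YM b u ((s - 1) + int i) = 0" if "i \<noteq> 0" for i
      by (rule OmD[OF u b]) (use that in \<open>simp add: bs\<close>)
    have f1: "fsum (\<lambda>i. ((-1) ^ i * bn (-1) i) *\<^sub>C YM a (YM b u ((s - 1) + int i)) (k + -1 - int i)) = YM a (YM b u (s - 1)) (k - 1)"
      by (subst fsum_single[where k=0]) (auto simp: z1)
    have "oP (star Y \<omega> a b) u = YM a (YM b u (s - 1)) (k - 1)"
      unfolding exp st j f1 z2 by simp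
    also have "\<dots> = oP a (oP b u)"
      using True True2 a b by (simp add: oop_hom oh_def k_def s_def)
    finally show ?thesis .
  qed
qed

lemma B7: "u \<in> Om \<Longrightarrow> oP (star Y \<omega> a b) u = oP a (oP b u)"
proof (induct a rule: hom_induct)
  case 1 then show ?case by (simp add: is_clin_0[OF oop_lin1])
next
  case (2 a a') then show ?case by (simp add: is_clinD[OF star_lin1] is_clinD[OF oop_lin1])
next
  case (3 \<alpha> a)
  show ?case
  proof (induct b rule: hom_induct)
    case 1 then show ?case by (simp add: is_clin_0[OF oop_lin1] is_clin_0[OF oop_lin2])
  next
    case (2 b b') then show ?case by (simp add: is_clinD[OF star_lin2] is_clinD[OF oop_lin1] is_clinD[OF oop_lin2])
  next
    case (3 \<beta> b) then show ?case using B7hom \<open>a \<in> V \<alpha>\<close> \<open>u \<in> Om\<close> by blast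
  qed
qed

end

theorem theorem3p2:
  fixes Y :: "'v::cvector \<Rightarrow> 'v \<Rightarrow> int \<Rightarrow> 'v" and vac \<omega> :: 'v and cc :: complex
  assumes "qVOA Y vac \<omega> cc"
  shows
    \<comment> \<open>(a) * is bilinear, O(V) is a two-sided ideal, A(V) associative with identity, omega central\<close>
    "(\<forall>b. is_clin (\<lambda>a. star Y \<omega> a b)) \<and> (\<forall>a. is_clin (\<lambda>b. star Y \<omega> a b))
   \<and> (\<forall>u\<in>OV Y \<omega>. \<forall>a. star Y \<omega> a u \<in> OV Y \<omega> \<and> star Y \<omega> u a \<in> OV Y \<omega>)
   \<and> (\<forall>a b c. star Y \<omega> (star Y \<omega> a b) c - star Y \<omega> a (star Y \<omega> b c) \<in> OV Y \<omega>)
   \<and> (\<forall>a. star Y \<omega> vac a - a \<in> OV Y \<omega> \<and> star Y \<omega> a vac - a \<in> OV Y \<omega>)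
   \<and> (\<forall>a. star Y \<omega> \<omega> a - star Y \<omega> a \<omega> \<in> OV Y \<omega>)
   \<and> \<comment> \<open>(b) Omega(M) is an A(V)-module with a + O(V) acting as o(a)\<close>
     (\<forall>YM :: 'v \<Rightarrow> 'm::cvector \<Rightarrow> int \<Rightarrow> 'm. weak_module Y vac \<omega> YM \<longrightarrow>
        0 \<in> Omega Y \<omega> YM
      \<and> (\<forall>u\<in>Omega Y \<omega> YM. \<forall>v\<in>Omega Y \<omega> YM. u + v \<in> Omega Y \<omega> YM)
      \<and> (\<forall>c. \<forall>u\<in>Omega Y \<omega> YM. c *\<^sub>C u \<in> Omega Y \<omega> YM)
      \<and> (\<forall>u. is_clin (\<lambda>a. oop Y \<omega> YM a u))
      \<and> (\<forall>a. \<forall>u\<in>Omega Y \<omega> YM. oop Y \<omega> YM a u \<in> Omega Y \<omega> YM)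
      \<and> (\<forall>a\<in>OV Y \<omega>. \<forall>u\<in>Omega Y \<omega> YM. oop Y \<omega> YM a u = 0)
      \<and> (\<forall>a b. \<forall>u\<in>Omega Y \<omega> YM. oop Y \<omega> YM (star Y \<omega> a b) u = oop Y \<omega> YM a (oop Y \<omega> YM b u))
      \<and> (\<forall>u\<in>Omega Y \<omega> YM. oop Y \<omega> YM vac u = u))"
proof -
  interpret qv Y vac \<omega> cc by unfold_locales (rule assms)
  show ?thesis
  proof (intro conjI allI ballI impI)
    show "is_clin (\<lambda>a. star Y \<omega> a b)" for b by (rule star_lin1)
    show "is_clin (\<lambda>b. star Y \<omega> a b)" for a by (rule star_lin2)
    show "star Y \<omega> a u \<in> OV Y \<omega>" if "u \<in> OV Y \<omega>" for u a using that by (rule LI_gen)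
    show "star Y \<omega> u a \<in> OV Y \<omega>" if "u \<in> OV Y \<omega>" for u a using that by (rule RI_gen)
    show "star Y \<omega> (star Y \<omega> a b) c - star Y \<omega> a (star Y \<omega> b c) \<in> OV Y \<omega>" for a b c by (rule AS_gen)
    show "star Y \<omega> vac a - a \<in> OV Y \<omega>" for a by (simp add: ID1 OV_0)
    show "star Y \<omega> a vac - a \<in> OV Y \<omega>" for a by (rule ID2)
    show "star Y \<omega> \<omega> a - star Y \<omega> a \<omega> \<in> OV Y \<omega>" for a by (rule OC_gen)
  next
    fix YM :: "'v \<Rightarrow> 'm::cvector \<Rightarrow> int \<Rightarrow> 'm"
    assume wm: "weak_module Y vac \<omega> YM"
    interpret qvm Y vac \<omega> cc YM by unfold_locales (rule wm)
    show "0 \<in> Omega Y \<omega> YM" by (rule Om_0)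
    show "u + v \<in> Omega Y \<omega> YM" if "u \<in> Omega Y \<omega> YM" "v \<in> Omega Y \<omega> YM" for u v using that by (rule Om_add)
    show "c *\<^sub>C u \<in> Omega Y \<omega> YM" if "u \<in> Omega Y \<omega> YM" for c u using that by (rule Om_scale)
    show "is_clin (\<lambda>a. oop Y \<omega> YM a u)" for u by (rule oop_lin1)
    show "oop Y \<omega> YM a u \<in> Omega Y \<omega> YM" if "u \<in> Omega Y \<omega> YM" for a u using that by (rule B5)
    show "oop Y \<omega> YM a u = 0" if "a \<in> OV Y \<omega>" "u \<in> Omega Y \<omega> YM" for a u using that by (rule B6)
    show "oop Y \<omega> YM (star Y \<omega> a b) u = oop Y \<omega> YM a (oop Y \<omega> YM b u)" if "u \<in> Omega Y \<omega> YM" for a b u using that by (rule B7)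
    show "oop Y \<omega> YM vac u = u" for u by (rule B8)
  qed
qed

end
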